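(* Let $k\ge1$ and $n$ be integers with $2k+1\le n$, let $m=n-k$, and let $\pi_{n,k}:=[1,\ldots,k,\,n-k,\,n-k-1,\ldots,k+1]\in\mathfrak{S}_{m}$. Identify the diagonal $\overline{ij}\in\Gamma_{n,k}$ ($i<j$) with the box in row $a=n+1-j$ and column $b=i$ of the staircase $\{(a,b): a,b\ge1,\ a+b\le m\}$; this identifies $\Gamma_{n,k}$ with the set of boxes $(a,b)$ with $k+2\le a+b\le m$. Then the map sending a $k$-triangulation $T$ of the $n$-gon to the pipe dream of size $m$ whose crossing tiles are exactly the boxes corresponding to the diagonals in $\Gamma_{n,k}\setminus T$ (all other boxes, i.e. those corresponding to diagonals of $T$ and those with $a+b\le k+1$, being elbow tiles) is a bijection between $k$-triangulations of the $n$-gon and reduced pipe dreams for $\pi_{n,k}$.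
   Context: Label the vertices of a convex $n$-gon by $1,\ldots,n$ in cyclic order, and write $\overline{ij}$ for the segment joining $i$ and $j$. Set $\Gamma_{n,k}:=\{\overline{ij}: k<|i-j|<n-k\}$. A $(k+1)$-crossing is a set of $k+1$ diagonals which mutually cross. A $k$-triangulation is a maximal subset of $\Gamma_{n,k}$ containing no $(k+1)$-crossing. A pipe dream of size $m$ is a filling of each box $(a,b)$ (row $a$ from the top, column $b$ from the left) of the staircase $\{(a,b):a,b\ge1, a+b\le m\}$ with either a crossing tile (two pipes crossing) or an elbow tile (two turning pipes, one connecting the top to the left edge, one connecting the bottom to the right edge), with an elbow half-tile joining the right and bottom edges of each position $(a,b)$ with $a+b=m+1$. Pipes enter at the top of the columns $1,\ldots,m$ and exit at the left of the rows $1,\ldots,m$; the permutation $\pi(D)$ of the pipe dream $D$ is read off by recording at the left end of each row the column number where the pipe ending there entered, and reading these labels from top to bottom. $D$ is reduced if any two pipes cross at most once. A reduced pipe dream for $\pi$ is a reduced pipe dream $D$ with $\pi(D)=\pi$. *)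

theory Defs
  imports Main
begin

definition Gamma :: "nat \<Rightarrow> nat \<Rightarrow> (nat \<times> nat) set" where
  "Gamma n k = {(i, j). 1 \<le> i \<and> i < j \<and> j \<le> n \<and> k < j - i \<and> j - i < n - k}"

text \<open>Two segments (i,j), (i',j') with endpoints on a convex polygon cross
  (in their interiors) iff their endpoints strictly interlace.\<close>

definition crosses :: "nat \<times> nat \<Rightarrow> nat \<times> nat \<Rightarrow> bool" where
  "crosses e f = (case e of (i, j) \<Rightarrow> case f of (i', j') \<Rightarrow>
      (i < i' \<and> i' < j \<and> j < j') \<or> (i' < i \<and> i < j' \<and> j' < j))"

definition is_crossing :: "nat \<Rightarrow> (nat \<times> nat) set \<Rightarrow> bool" where
  "is_crossing r C = (card C = r \<and> (\<forall>e\<in>C. \<forall>f\<in>C. e \<noteq> f \<longrightarrow> crosses e f))"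

definition contains_crossing :: "nat \<Rightarrow> (nat \<times> nat) set \<Rightarrow> bool" where
  "contains_crossing r S = (\<exists>C. C \<subseteq> S \<and> is_crossing r C)"

definition k_triangulation :: "nat \<Rightarrow> nat \<Rightarrow> (nat \<times> nat) set \<Rightarrow> bool" where
  "k_triangulation n k T =
     (T \<subseteq> Gamma n k \<and> \<not> contains_crossing (k + 1) T \<and>
      (\<forall>T'. T \<subset> T' \<and> T' \<subseteq> Gamma n k \<longrightarrow> contains_crossing (k + 1) T'))"

definition staircase :: "nat \<Rightarrow> (nat \<times> nat) set" where
  "staircase m = {(a, b). 1 \<le> a \<and> 1 \<le> b \<and> a + b \<le> m}"

text \<open>A pipe dream of size m is encoded by the set D \<subseteq> staircase m of its
  crossing tiles (all other boxes of the staircase are elbows).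
  A pipe position is (a, b, fromTop): the pipe is entering box (a,b) through
  its top edge (fromTop = True) or through its right edge (fromTop = False).
  Column b = 0 means the pipe has exited at the left end of row a.
  On the antidiagonal a + b = m + 1 the half elbow turns a pipe coming from
  above to the left.\<close>

definition pd_step :: "nat \<Rightarrow> (nat \<times> nat) set \<Rightarrow> nat \<times> nat \<times> bool \<Rightarrow> nat \<times> nat \<times> bool" where
  "pd_step m D s = (case s of (a, b, fromtop) \<Rightarrow>
     if b = 0 then (a, b, fromtop)
     else if fromtop then
       (if a + b = m + 1 \<or> (a, b) \<notin> D then (a, b - 1, False) else (a + 1, b, True))
     else
       (if (a, b) \<in> D then (a, b - 1, False) else (a + 1, b, True)))"

definition pipe_visits :: "nat \<Rightarrow> (nat \<times> nat) set \<Rightarrow> nat \<Rightarrow> nat \<times> nat \<times> bool \<Rightarrow> bool" where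
  "pipe_visits m D c s = (\<exists>t. (pd_step m D ^^ t) (1, c, True) = s)"

definition exit_row :: "nat \<Rightarrow> (nat \<times> nat) set \<Rightarrow> nat \<Rightarrow> nat" where
  "exit_row m D c = (THE a. pipe_visits m D c (a, 0, False))"

definition pd_perm :: "nat \<Rightarrow> (nat \<times> nat) set \<Rightarrow> nat list" where
  "pd_perm m D = map (\<lambda>a. THE c. 1 \<le> c \<and> c \<le> m \<and> exit_row m D c = a) [1..<m + 1]"

definition crossing_boxes :: "nat \<Rightarrow> (nat \<times> nat) set \<Rightarrow> nat \<Rightarrow> nat \<Rightarrow> (nat \<times> nat) set" where
  "crossing_boxes m D c c' = {(a, b). (a, b) \<in> D \<and>
      ((pipe_visits m D c (a, b, True) \<and> pipe_visits m D c' (a, b, False)) \<or>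
       (pipe_visits m D c' (a, b, True) \<and> pipe_visits m D c (a, b, False)))}"

definition reduced_pd :: "nat \<Rightarrow> (nat \<times> nat) set \<Rightarrow> bool" where
  "reduced_pd m D = (D \<subseteq> staircase m \<and>
     (\<forall>c c'. 1 \<le> c \<and> c < c' \<and> c' \<le> m \<longrightarrow> card (crossing_boxes m D c c') \<le> 1))"

definition reduced_pd_for :: "nat \<Rightarrow> nat list \<Rightarrow> (nat \<times> nat) set \<Rightarrow> bool" where
  "reduced_pd_for m \<pi> D = (reduced_pd m D \<and> pd_perm m D = \<pi>)"

definition pi_nk :: "nat \<Rightarrow> nat \<Rightarrow> nat list" where
  "pi_nk n k = [1..<k + 1] @ rev [k + 1..<n - k + 1]"

definition box_of :: "nat \<Rightarrow> nat \<times> nat \<Rightarrow> nat \<times> nat" where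
  "box_of n e = (case e of (i, j) \<Rightarrow> (n + 1 - j, i))"

definition pd_of_triang :: "nat \<Rightarrow> nat \<Rightarrow> (nat \<times> nat) set \<Rightarrow> (nat \<times> nat) set" where
  "pd_of_triang n k T = box_of n ` (Gamma n k - T)"

end

theory Submission
  imports Defs "HOL-Library.Product_Lexorder"
begin

function lab :: "nat \<Rightarrow> (nat \<times> nat) set \<Rightarrow> nat \<Rightarrow> nat \<Rightarrow> bool \<Rightarrow> nat" where
  "lab m D a b True = (if a \<le> 1 then b else if (a - 1, b) \<in> D then lab m D (a - 1) b True
        else lab m D (a - 1) b False)"
| "lab m D a b False = (if m < a + b then 0 else if (a, b + 1) \<in> D then lab m D a (b + 1) False
        else lab m D a (b + 1) True)"
  by pat_completeness auto
termination
  by (relation "measure (\<lambda>(m,D,a,b,ft). 2*a + 2*(m+1-b) + (if ft then 1 else 0))") auto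

declare lab.simps[simp del]

lemma labT1: "a \<le> 1 \<Longrightarrow> lab m D a b True = b" by (simp add: lab.simps)
lemma labTin: "2 \<le> a \<Longrightarrow> (a - 1, b) \<in> D \<Longrightarrow> lab m D a b True = lab m D (a - 1) b True"
  by (simp add: lab.simps)
lemma labTout: "2 \<le> a \<Longrightarrow> (a - 1, b) \<notin> D \<Longrightarrow> lab m D a b True = lab m D (a - 1) b False"
  by (simp add: lab.simps)
lemma labF0: "m < a + b \<Longrightarrow> lab m D a b False = 0" by (simp add: lab.simps)
lemma labFin: "a + b \<le> m \<Longrightarrow> (a, b + 1) \<in> D \<Longrightarrow> lab m D a b False = lab m D a (b + 1) False"
  by (simp add: lab.simps)
lemma labFout: "a + b \<le> m \<Longrightarrow> (a, b + 1) \<notin> D \<Longrightarrow> lab m D a b False = lab m D a (b + 1) True"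
  by (simp add: lab.simps)

definition vst :: "nat \<Rightarrow> nat \<times> nat \<times> bool \<Rightarrow> bool" where
  "vst m s = (case s of (a, b, ft) \<Rightarrow> 1 \<le> a \<and> (if ft then 1 \<le> b \<and> a + b \<le> m + 1 else a + b \<le> m))"

locale pdm =
  fixes m :: nat and D :: "(nat \<times> nat) set"
  assumes Dst: "D \<subseteq> staircase m" and m1: "1 \<le> m"
begin

abbreviation L where "L a b ft \<equiv> lab m D a b ft"

lemma D_sum: "(a, b) \<in> D \<Longrightarrow> a + b \<le> m \<and> 1 \<le> a \<and> 1 \<le> b"
  using Dst by (auto simp: staircase_def)

lemma step_valid: "vst m s \<Longrightarrow> vst m (pd_step m D s)"
proof -
  assume v: "vst m s"
  obtain a b ft where s: "s = (a, b, ft)" by (metis prod_cases3)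
  show ?thesis using v D_sum[of a b] unfolding s vst_def pd_step_def
    by (cases ft) auto
qed

lemma step_lab:
  assumes v: "vst m (a, b, ft)" and e: "pd_step m D (a, b, ft) = (a', b', ft')"
  shows "L a' b' ft' = L a b ft"
proof (cases "b = 0")
  case True then show ?thesis using e by (simp add: pd_step_def)
next
  case b: False
  show ?thesis
  proof (cases ft)
    case True
    show ?thesis
    proof (cases "a + b = m + 1 \<or> (a, b) \<notin> D")
      case c: True
      then have "(a,b) \<notin> D" using D_sum by fastforce
      then show ?thesis using e v b True c labFout[of a "b - 1" m D]
        by (auto simp: pd_step_def vst_def)
    next
      case c: False
      then show ?thesis using e v b True labTin[of "a+1" b D m]
        by (auto simp: pd_step_def vst_def)
    qed
  next
    case False
    show ?thesis
    proof (cases "(a, b) \<in> D")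
      case c: True
      then show ?thesis using e v b False labFin[of a "b - 1" m D]
        by (auto simp: pd_step_def vst_def)
    next
      case c: False
      then show ?thesis using e v b False labTout[of "a+1" b D m]
        by (auto simp: pd_step_def vst_def)
    qed
  qed
qed

lemma iter_valid: "vst m s \<Longrightarrow> vst m ((pd_step m D ^^ t) s)"
  by (induction t) (auto intro: step_valid)

lemma iter_lab: "vst m (a, b, ft) \<Longrightarrow> (pd_step m D ^^ t) (a, b, ft) = (a', b', ft') \<Longrightarrow> L a' b' ft' = L a b ft"
proof (induction t arbitrary: a' b' ft')
  case 0 then show ?case by simp
next
  case (Suc t)
  obtain a1 b1 f1 where e: "(pd_step m D ^^ t) (a, b, ft) = (a1, b1, f1)" by (metis prod_cases3)
  have v: "vst m (a1, b1, f1)" using iter_valid[OF Suc.prems(1), of t] e by simp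
  have "pd_step m D (a1, b1, f1) = (a', b', ft')" using Suc.prems(2) e by simp
  then have "L a' b' ft' = L a1 b1 f1" using step_lab v by blast
  also have "\<dots> = L a b ft" using Suc.IH[OF Suc.prems(1) e] .
  finally show ?case .
qed

lemma visits_lab:
  assumes "1 \<le> c" "c \<le> m" "pipe_visits m D c (a, b, ft)"
  shows "L a b ft = c \<and> vst m (a, b, ft)"
proof -
  obtain t where t: "(pd_step m D ^^ t) (1, c, True) = (a, b, ft)"
    using assms(3) unfolding pipe_visits_def by blast
  have v: "vst m (1, c, True)" using assms by (simp add: vst_def)
  show ?thesis using iter_lab[OF v t] iter_valid[OF v, of t] t labT1[of 1 m D c] by simp
qed

lemma visits_step: "pipe_visits m D c s \<Longrightarrow> pd_step m D s = s' \<Longrightarrow> pipe_visits m D c s'"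
  unfolding pipe_visits_def by (metis funpow.simps(2) comp_apply)

lemma lab_visits_aux:
  "\<forall>a b ft. 2*a + 2*(m+1-b) + (if ft then 1 else 0) = N \<longrightarrow> vst m (a, b, ft) \<longrightarrow> L a b ft = c \<longrightarrow> pipe_visits m D c (a, b, ft)"
proof (induction N rule: less_induct)
  case (less N)
  show ?case
  proof (intro allI impI)
    fix a b ft
    assume N: "2*a + 2*(m+1-b) + (if ft then 1 else 0) = N" and v: "vst m (a, b, ft)" and l: "L a b ft = c"
    show "pipe_visits m D c (a, b, ft)"
    proof (cases ft)
      case T: True
      show ?thesis
      proof (cases "a \<le> 1")
        case True
        then have "a = 1" using v by (simp add: vst_def)
        then show ?thesis using l T labT1[of a m D b] unfolding pipe_visits_def by (auto intro: exI[of _ 0])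
      next
        case False
        show ?thesis
        proof (cases "(a - 1, b) \<in> D")
          case True
          have v': "vst m (a - 1, b, True)" using v False T by (auto simp: vst_def)
          have "pipe_visits m D c (a - 1, b, True)"
            using less.IH[rule_format, OF _ refl v'] N False T l labTin[of a b D m] True by simp
          moreover have "pd_step m D (a - 1, b, True) = (a, b, True)"
            using True False D_sum[OF True] v' by (auto simp: pd_step_def vst_def)
          ultimately show ?thesis using T by (simp add: visits_step)
        next
          case F: False
          have v': "vst m (a - 1, b, False)" using v False T by (auto simp: vst_def)
          have "pipe_visits m D c (a - 1, b, False)"
            using less.IH[rule_format, OF _ refl v'] N False T l labTout[of a b D m] F by simp
          moreover have "pd_step m D (a - 1, b, False) = (a, b, True)"
            using F False v v' T by (auto simp: pd_step_def vst_def)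
          ultimately show ?thesis using T by (simp add: visits_step)
        qed
      qed
    next
      case Fa: False
      have nl: "a + b \<le> m" using v Fa by (simp add: vst_def)
      show ?thesis
      proof (cases "(a, b + 1) \<in> D")
        case True
        have v': "vst m (a, b + 1, False)" using v D_sum[OF True] Fa by (simp add: vst_def)
        have "pipe_visits m D c (a, b + 1, False)"
          using less.IH[rule_format, OF _ refl v'] N nl Fa l labFin[of a b m D] True by simp
        moreover have "pd_step m D (a, b + 1, False) = (a, b, False)"
          using True by (auto simp: pd_step_def)
        ultimately show ?thesis using Fa by (simp add: visits_step)
      next
        case F: False
        have v': "vst m (a, b + 1, True)" using v nl Fa by (simp add: vst_def)
        have "pipe_visits m D c (a, b + 1, True)"
          using less.IH[rule_format, OF _ refl v'] N nl Fa l labFout[of a b m D] F by simp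
        moreover have "pd_step m D (a, b + 1, True) = (a, b, False)"
          using F by (auto simp: pd_step_def)
        ultimately show ?thesis using Fa by (simp add: visits_step)
      qed
    qed
  qed
qed

lemma lab_visits:
  "vst m (a, b, ft) \<Longrightarrow> L a b ft = c \<Longrightarrow> pipe_visits m D c (a, b, ft)"
  using lab_visits_aux by blast

lemma visits_iff:
  assumes "1 \<le> c" "c \<le> m" "vst m (a, b, ft)"
  shows "pipe_visits m D c (a, b, ft) \<longleftrightarrow> L a b ft = c"
  using visits_lab[OF assms(1,2)] lab_visits[OF assms(3)] by blast

end


definition sw :: "nat \<Rightarrow> nat \<Rightarrow> nat" where
  "sw g p = (if p = g then g + 1 else if p = g + 1 then g else p)"

lemma sw_sw[simp]: "sw g (sw g p) = p" by (simp add: sw_def)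

lemma sw_range: "1 \<le> g \<Longrightarrow> g + 1 \<le> m \<Longrightarrow> p \<in> {1..m} \<Longrightarrow> sw g p \<in> {1..m}"
  by (auto simp: sw_def)

lemma sw_bij: "1 \<le> g \<Longrightarrow> g + 1 \<le> m \<Longrightarrow> bij_betw (sw g) {1..m} {1..m}"
  by (rule bij_betw_byWitness[where f' = "sw g"]) (auto simp: sw_def)

lemma sw_mono: "p < p' \<Longrightarrow> \<not> (p = g \<and> p' = g + 1) \<Longrightarrow> sw g p < sw g p'"
  by (auto simp: sw_def)

context pdm
begin

definition S :: "nat \<Rightarrow> nat \<Rightarrow> nat \<Rightarrow> nat" where
  "S a b p = (if p < a then L p 0 False else if p < a + b then L a (p + 1 - a) True
      else if p = a + b then L a b False else L (a + 1) (p - a) True)"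

lemma S_lo: "p < a \<Longrightarrow> S a b p = L p 0 False" by (simp add: S_def)
lemma S_mid: "a \<le> p \<Longrightarrow> p < a + b \<Longrightarrow> S a b p = L a (p + 1 - a) True" by (simp add: S_def)
lemma S_hi: "a + b < p \<Longrightarrow> S a b p = L (a + 1) (p - a) True" by (simp add: S_def)

lemma S_T: "1 \<le> b \<Longrightarrow> S a b (a + b - 1) = L a b True"
proof -
  assume "1 \<le> b"
  then have "\<not> a + b - 1 < a" "a + b - 1 < a + b" "a + b - 1 + 1 - a = b" by auto
  then show ?thesis by (simp add: S_def)
qed

lemma S_R: "S a b (a + b) = L a b False"
  by (simp add: S_def)

lemma S_step:
  assumes "1 \<le> a" "1 \<le> b" "a + b \<le> m"
  shows "S a (b - 1) p = (if (a, b) \<in> D then S a b (sw (a + b - 1) p) else S a b p)"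
proof -
  consider "p < a" | "a \<le> p \<and> p < a + b - 1" | "p = a + b - 1" | "p = a + b" | "a + b < p" by linarith
  then show ?thesis
  proof cases
    case 1
    have "sw (a + b - 1) p = p" using 1 assms by (auto simp: sw_def)
    then show ?thesis using 1 assms by (simp add: S_def)
  next
    case 2
    have "sw (a + b - 1) p = p" using 2 assms by (auto simp: sw_def)
    moreover have "p < a + b" "\<not> p < a" "p < a + (b - 1)" using 2 by auto
    ultimately show ?thesis using assms by (simp add: S_def)
  next
    case 3
    have "\<not> p < a" "\<not> p < a + (b - 1)" "p = a + (b - 1)" using 3 assms by auto
    then have e: "S a (b - 1) p = L a (b - 1) False" by (simp add: S_def)
    have sw: "sw (a + b - 1) p = a + b" using 3 assms by (simp add: sw_def)
    show ?thesis
    proof (cases "(a, b) \<in> D")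
      case True
      have "L a (b - 1) False = L a b False" using labFin[of a "b - 1" m D] assms True by simp
      then show ?thesis using e sw True S_R by simp
    next
      case False
      have "L a (b - 1) False = L a b True" using labFout[of a "b - 1" m D] assms False by simp
      then show ?thesis using e 3 False S_T[OF assms(2)] by simp
    qed
  next
    case 4
    have f: "\<not> p < a" "\<not> p < a + (b - 1)" "p \<noteq> a + (b - 1)" "p - a = b" using 4 assms by auto
    have "S a (b - 1) p = L (a + 1) (p - a) True" unfolding S_def using f(1-3) by (simp only: if_False)
    then have e: "S a (b - 1) p = L (a + 1) b True" using f(4) by simp
    have sw: "sw (a + b - 1) p = a + b - 1" using 4 assms by (auto simp add: sw_def)
    show ?thesis
    proof (cases "(a, b) \<in> D")
      case True
      have "L (a + 1) b True = L a b True" using labTin[of "a + 1" b D m] assms True by simp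
      then show ?thesis using e sw True S_T[OF assms(2)] by simp
    next
      case False
      have "L (a + 1) b True = L a b False" using labTout[of "a + 1" b D m] assms False by simp
      then show ?thesis using e 4 False S_R by simp
    qed
  next
    case 5
    have "sw (a + b - 1) p = p" using 5 assms by (auto simp: sw_def)
    moreover have "a + (b - 1) < p" using 5 by simp
    ultimately show ?thesis using 5 assms S_hi[of a "b - 1" p] S_hi[of a b p] by simp
  qed
qed

lemma S_row:
  assumes "1 \<le> a" "a + 1 \<le> m" "p \<le> m"
  shows "S a 0 p = S (a + 1) (m - a - 1) p"
proof -
  consider "p \<le> a" | "a < p \<and> p < m" | "p = m" using assms by linarith
  then show ?thesis
  proof cases
    case 1 then show ?thesis using assms by (auto simp: S_def)
  next
    case 2 then show ?thesis using assms by (auto simp: S_def)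
  next
    case 3
    have "(a + 1, m - a) \<notin> D" using D_sum assms by fastforce
    then have "L (a + 1) (m - a - 1) False = L (a + 1) (m - a) True"
      using labFout[of "a + 1" "m - a - 1" m D] assms by (simp add: Suc_diff_Suc)
    then show ?thesis using 3 assms by (simp add: S_def)
  qed
qed

lemma S_init: "1 \<le> p \<Longrightarrow> p \<le> m \<Longrightarrow> S 1 (m - 1) p = p"
proof -
  assume p: "1 \<le> p" "p \<le> m"
  show ?thesis
  proof (cases "p < m")
    case True then show ?thesis using p m1 labT1 by (simp add: S_def)
  next
    case False
    then have pm: "p = m" using p by simp
    have "(1, m) \<notin> D" using D_sum by fastforce
    then have "L 1 (m - 1) False = L 1 m True" using labFout[of 1 "m - 1" m D] m1 by simp
    then show ?thesis using pm m1 labT1 by (simp add: S_def)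
  qed
qed

lemma S_final: "p \<le> m \<Longrightarrow> S m 0 p = L p 0 False"
  by (auto simp: S_def)

lemma cut_induct[consumes 2, case_names init step row]:
  assumes a: "1 \<le> a" "a + b \<le> m"
    and I: "P 1 (m - 1)"
    and St: "\<And>a b. 1 \<le> a \<Longrightarrow> 1 \<le> b \<Longrightarrow> a + b \<le> m \<Longrightarrow> P a b \<Longrightarrow> P a (b - 1)"
    and Rw: "\<And>a. 1 \<le> a \<Longrightarrow> a + 1 \<le> m \<Longrightarrow> P a 0 \<Longrightarrow> P (a + 1) (m - a - 1)"
  shows "P a b"
proof -
  have row: "\<And>d. d \<le> m - a' \<Longrightarrow> 1 \<le> a' \<Longrightarrow> a' \<le> m \<Longrightarrow> P a' (m - a') \<Longrightarrow> P a' (m - a' - d)" for a'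
  proof -
    fix d assume "d \<le> m - a'" "1 \<le> a'" "a' \<le> m" "P a' (m - a')"
    then show "P a' (m - a' - d)"
    proof (induction d)
      case 0 then show ?case by simp
    next
      case (Suc d)
      have "P a' (m - a' - d - 1)"
        using St[of a' "m - a' - d"] Suc by simp
      then show ?case by (simp add: diff_diff_add)
    qed
  qed
  have start: "1 \<le> a' \<longrightarrow> a' \<le> m \<longrightarrow> P a' (m - a')" for a'
  proof (induction a')
    case 0 then show ?case by simp
  next
    case (Suc a')
    show ?case
    proof (cases "a' = 0")
      case True then show ?thesis using I by simp
    next
      case False
      show ?thesis
      proof (intro impI)
        assume "Suc a' \<le> m"
        then have h: "1 \<le> a'" "a' + 1 \<le> m" using False by auto
        have "P a' (m - a' - (m - a'))" using row[of "m - a'" a'] Suc.IH h by simp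
        then have "P (a' + 1) (m - a' - 1)" using Rw[of a'] h by simp
        then show "P (Suc a') (m - Suc a')" by simp
      qed
    qed
  qed
  have "P a (m - a - (m - a - b))" using row[of "m - a - b" a] start[of a] a by auto
  then show ?thesis using a by simp
qed

lemma S_bij: "1 \<le> a \<Longrightarrow> a + b \<le> m \<Longrightarrow> bij_betw (S a b) {1..m} {1..m}"
proof (induction a b rule: cut_induct)
  case init
  have "bij_betw id {1..m} {1..m}" by simp
  moreover have "\<forall>p\<in>{1..m}. S 1 (m - 1) p = id p" using S_init by simp
  ultimately show ?case using bij_betw_cong[of "{1..m}" "S 1 (m - 1)" id] by auto
next
  case (step a b)
  show ?case
  proof (cases "(a, b) \<in> D")
    case True
    have "bij_betw (S a b \<circ> sw (a + b - 1)) {1..m} {1..m}"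
      using bij_betw_trans[OF sw_bij step.IH, of "a + b - 1"] step.hyps by simp
    moreover have "S a (b - 1) = S a b \<circ> sw (a + b - 1)"
      using S_step[OF step.hyps(1-3)] True by auto
    ultimately show ?thesis by metis
  next
    case False
    have "S a (b - 1) = S a b" using S_step[OF step.hyps(1-3)] False by auto
    then show ?thesis using step.IH by simp
  qed
next
  case (row a)
  show ?case using row.IH bij_betw_cong[of "{1..m}" "S a 0" "S (a + 1) (m - a - 1)"] S_row[OF row.hyps(1,2)]
    by auto
qed

end


lemma staircase_finite: "finite (staircase m)"
proof -
  have "staircase m \<subseteq> {0..m} \<times> {0..m}" by (auto simp: staircase_def)
  then show ?thesis by (rule finite_subset) simp
qed

context pdm
begin

definition proc :: "nat \<Rightarrow> nat \<Rightarrow> (nat \<times> nat) set" where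
  "proc a b = {x \<in> staircase m. fst x < a \<or> (fst x = a \<and> b < snd x)}"

definition Tb :: "nat \<times> nat \<Rightarrow> nat" where "Tb x = L (fst x) (snd x) True"
definition Rb :: "nat \<times> nat \<Rightarrow> nat" where "Rb x = L (fst x) (snd x) False"

definition cb :: "nat \<Rightarrow> nat \<Rightarrow> (nat \<times> nat) set" where
  "cb u w = {x \<in> D. (Tb x = u \<and> Rb x = w) \<or> (Tb x = w \<and> Rb x = u)}"

lemma cb_sym: "cb u w = cb w u" by (auto simp: cb_def)

lemma finite_D: "finite D" using Dst staircase_finite finite_subset by blast
lemma finite_cb: "finite (cb u w)" using finite_D by (simp add: cb_def)

lemma proc_step: "1 \<le> a \<Longrightarrow> 1 \<le> b \<Longrightarrow> a + b \<le> m \<Longrightarrow>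
   proc a (b - 1) = insert (a, b) (proc a b) \<and> (a, b) \<notin> proc a b"
  by (auto simp: proc_def staircase_def)

lemma proc_row: "1 \<le> a \<Longrightarrow> a + 1 \<le> m \<Longrightarrow> proc a 0 = proc (a + 1) (m - a - 1)"
  by (auto simp: proc_def staircase_def)

lemma proc_init: "proc 1 (m - 1) = {}"
  by (auto simp: proc_def staircase_def)

lemma proc_final: "proc m 0 = staircase m"
  by (auto simp: proc_def staircase_def)

lemma S_inj: "1 \<le> a \<Longrightarrow> a + b \<le> m \<Longrightarrow> p \<in> {1..m} \<Longrightarrow> p' \<in> {1..m} \<Longrightarrow> S a b p = S a b p' \<Longrightarrow> p = p'"
  using S_bij[of a b] unfolding bij_betw_def inj_on_def by blast

lemma S_range: "1 \<le> a \<Longrightarrow> a + b \<le> m \<Longrightarrow> p \<in> {1..m} \<Longrightarrow> S a b p \<in> {1..m}"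
  using S_bij[of a b] unfolding bij_betw_def by blast

definition PI :: "nat \<Rightarrow> nat \<Rightarrow> bool" where
  "PI a b = (\<forall>p p'. 1 \<le> p \<longrightarrow> p < p' \<longrightarrow> p' \<le> m \<longrightarrow>
      (S a b p' < S a b p \<longleftrightarrow> odd (card (cb (S a b p) (S a b p') \<inter> proc a b))))"

lemma PI_all: "1 \<le> a \<Longrightarrow> a + b \<le> m \<Longrightarrow> PI a b"
proof (induction a b rule: cut_induct)
  case init
  show ?case unfolding PI_def using S_init proc_init by simp
next
  case (step a b)
  have x: "(a, b) \<in> staircase m" using step.hyps by (simp add: staircase_def)
  note pr = proc_step[OF step.hyps(1-3)]
  show ?case
  proof (cases "(a, b) \<in> D")
    case False
    have S': "S a (b - 1) = S a b" using S_step[OF step.hyps(1-3)] False by auto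
    have "cb u w \<inter> proc a (b - 1) = cb u w \<inter> proc a b" for u w
      using pr False by (auto simp: cb_def)
    then show ?thesis using step.IH S' by (simp add: PI_def)
  next
    case True
    define g where "g = a + b - 1"
    have g1: "1 \<le> g" "g + 1 \<le> m" "g + 1 = a + b" using step.hyps by (auto simp: g_def)
    have S': "S a (b - 1) p = S a b (sw g p)" for p using S_step[OF step.hyps(1-3)] True g_def by auto
    have Tx: "Tb (a, b) = S a b g" using S_T[of b a] step.hyps by (simp add: Tb_def g_def)
    have Rx: "Rb (a, b) = S a b (g + 1)" using S_R[of a b] g1 by (simp add: Rb_def)
    have inj: "\<And>p p'. p \<in> {1..m} \<Longrightarrow> p' \<in> {1..m} \<Longrightarrow> S a b p = S a b p' \<Longrightarrow> p = p'"
      using S_inj step.hyps by blast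
    show ?thesis unfolding PI_def
    proof (intro allI impI)
      fix p p' assume pp: "1 \<le> p" "p < p'" "p' \<le> m"
      show "S a (b - 1) p' < S a (b - 1) p \<longleftrightarrow>
            odd (card (cb (S a (b - 1) p) (S a (b - 1) p') \<inter> proc a (b - 1)))"
      proof (cases "p = g \<and> p' = g + 1")
        case True
        have e1: "S a (b - 1) p = S a b (g + 1)" "S a (b - 1) p' = S a b g"
          using S' True by (auto simp: sw_def)
        have xin: "(a, b) \<in> cb (S a b g) (S a b (g + 1))" using True Tx Rx `(a,b) \<in> D` by (simp add: cb_def)
        have "cb (S a b (g + 1)) (S a b g) \<inter> proc a (b - 1) =
              insert (a, b) (cb (S a b g) (S a b (g + 1)) \<inter> proc a b)"
          using pr xin cb_sym by auto
        moreover have "(a, b) \<notin> cb (S a b g) (S a b (g + 1)) \<inter> proc a b" using pr by simp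
        moreover have "finite (cb (S a b g) (S a b (g + 1)) \<inter> proc a b)" using finite_cb by simp
        ultimately have c: "card (cb (S a b (g + 1)) (S a b g) \<inter> proc a (b - 1)) =
             Suc (card (cb (S a b g) (S a b (g + 1)) \<inter> proc a b))" by simp
        have old: "S a b (g + 1) < S a b g \<longleftrightarrow> odd (card (cb (S a b g) (S a b (g + 1)) \<inter> proc a b))"
          using step.IH g1 unfolding PI_def by auto
        have ne: "S a b g \<noteq> S a b (g + 1)" using inj[of g "g + 1"] g1 by auto
        show ?thesis using e1 c old ne by auto
      next
        case False
        define q where "q = sw g p"
        define q' where "q' = sw g p'"
        have qq: "q < q'" using sw_mono[OF pp(2) False] by (simp add: q_def q'_def)
        have qr: "1 \<le> q" "q' \<le> m" using sw_range[OF g1(1,2), of p] sw_range[OF g1(1,2), of p'] pp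
          by (auto simp: q_def q'_def)
        have e1: "S a (b - 1) p = S a b q" "S a (b - 1) p' = S a b q'" using S' by (auto simp: q_def q'_def)
        have notx: "(a, b) \<notin> cb (S a b q) (S a b q')"
        proof
          assume "(a, b) \<in> cb (S a b q) (S a b q')"
          then have "(S a b g = S a b q \<and> S a b (g + 1) = S a b q') \<or> (S a b g = S a b q' \<and> S a b (g + 1) = S a b q)"
            using Tx Rx by (auto simp: cb_def)
          moreover have r: "q \<in> {1..m}" "q' \<in> {1..m}" "g \<in> {1..m}" "g + 1 \<in> {1..m}" using qr qq g1 by auto
          ultimately have "(g = q \<and> g + 1 = q') \<or> (g = q' \<and> g + 1 = q)"
            using inj[OF r(3) r(1)] inj[OF r(4) r(2)] inj[OF r(3) r(2)] inj[OF r(4) r(1)] by blast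
          then have "q = g \<and> q' = g + 1" using qq by auto
          then have "p = g + 1 \<and> p' = g" unfolding q_def q'_def by (metis sw_sw sw_def)
          then show False using pp by simp
        qed
        have "cb (S a b q) (S a b q') \<inter> proc a (b - 1) = cb (S a b q) (S a b q') \<inter> proc a b"
          using pr notx by auto
        moreover have "S a b q' < S a b q \<longleftrightarrow> odd (card (cb (S a b q) (S a b q') \<inter> proc a b))"
          using step.IH qq qr unfolding PI_def by auto
        ultimately show ?thesis using e1 by simp
      qed
    qed
  qed
next
  case (row a)
  have "\<forall>p\<le>m. S a 0 p = S (a + 1) (m - a - 1) p" using S_row[OF row.hyps] by simp
  show ?case unfolding PI_def
  proof (intro allI impI)
    fix p p' assume pp: "1 \<le> p" "p < p'" "p' \<le> m"
    have e: "S (a + 1) (m - a - 1) p = S a 0 p" "S (a + 1) (m - a - 1) p' = S a 0 p'"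
      using S_row[OF row.hyps] pp by auto
    show "S (a + 1) (m - a - 1) p' < S (a + 1) (m - a - 1) p \<longleftrightarrow>
          odd (card (cb (S (a + 1) (m - a - 1) p) (S (a + 1) (m - a - 1) p') \<inter> proc (a + 1) (m - a - 1)))"
      unfolding e proc_row[OF row.hyps, symmetric] using row.IH pp unfolding PI_def by blast
  qed
qed

end


lemma sw_image: "1 \<le> g \<Longrightarrow> (g + 1 \<le> P \<or> P < g) \<Longrightarrow> sw g ` {1..P} = {1..P}"
  by (rule set_eqI) (auto simp: sw_def image_iff)

definition cnt :: "nat set \<Rightarrow> nat \<Rightarrow> nat" where "cnt A q = card {x \<in> A. x \<le> q}"

lemma cnt_insert: "finite A \<Longrightarrow> y \<notin> A \<Longrightarrow> cnt (insert y A) q = cnt A q + (if y \<le> q then 1 else 0)"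
proof -
  assume f: "finite A" and y: "y \<notin> A"
  show ?thesis
  proof (cases "y \<le> q")
    case True
    have "{x \<in> insert y A. x \<le> q} = insert y {x \<in> A. x \<le> q}" using True by auto
    then show ?thesis using f y True by (simp add: cnt_def)
  next
    case False
    have "{x \<in> insert y A. x \<le> q} = {x \<in> A. x \<le> q}" using False by auto
    then show ?thesis using False by (simp add: cnt_def)
  qed
qed

lemma cnt_interval: "cnt {1..b} q = min b q"
proof -
  have "{x \<in> {1..b}. x \<le> q} = {1..min b q}" by auto
  then show ?thesis by (simp add: cnt_def)
qed

context pdm
begin

lemma TR_facts:
  assumes "x \<in> D"
  shows "Tb x \<in> {1..m} \<and> Rb x \<in> {1..m} \<and> Tb x \<noteq> Rb x"
proof -
  obtain a b where x: "x = (a, b)" by fastforce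
  have h: "1 \<le> a" "1 \<le> b" "a + b \<le> m" using D_sum assms x by auto
  have T: "Tb x = S a b (a + b - 1)" using S_T[of b a] h x by (simp add: Tb_def)
  have R: "Rb x = S a b (a + b)" using S_R x by (simp add: Rb_def)
  have r: "a + b - 1 \<in> {1..m}" "a + b \<in> {1..m}" using h by auto
  show ?thesis using T R S_range[OF h(1) h(3) r(1)] S_range[OF h(1) h(3) r(2)] S_inj[OF h(1) h(3) r] h
    by auto
qed

lemma uncrossed:
  assumes red: "\<forall>u w. card (cb u w) \<le> 1" and x: "x \<in> D"
  shows "Tb x < Rb x"
proof (rule ccontr)
  assume "\<not> Tb x < Rb x"
  then have lt: "Rb x < Tb x" using TR_facts[OF x] by auto
  obtain a b where xe: "x = (a, b)" by fastforce
  have h: "1 \<le> a" "1 \<le> b" "a + b \<le> m" using D_sum x xe by auto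
  have T: "Tb x = S a b (a + b - 1)" using S_T[of b a] h xe by (simp add: Tb_def)
  have R: "Rb x = S a b (a + b)" using S_R xe by (simp add: Rb_def)
  have "odd (card (cb (Tb x) (Rb x) \<inter> proc a b))"
    using PI_all[OF h(1) h(3)] h lt T R unfolding PI_def
    by (metis (no_types, lifting) Nat.add_diff_assoc2 add_diff_cancel_right' le_add2 le_trans less_add_one plus_1_eq_Suc)
  then have "card (cb (Tb x) (Rb x) \<inter> proc a b) \<noteq> 0" using odd_pos by fastforce
  then have "cb (Tb x) (Rb x) \<inter> proc a b \<noteq> {}" by (metis card.empty)
  then obtain y where y: "y \<in> cb (Tb x) (Rb x)" "y \<in> proc a b" by blast
  have "x \<notin> proc a b" using proc_step[OF h] xe by simp
  then have "x \<noteq> y" using y by auto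
  moreover have "x \<in> cb (Tb x) (Rb x)" using x by (simp add: cb_def)
  ultimately have "{x, y} \<subseteq> cb (Tb x) (Rb x)" using y by auto
  then have "card {x, y} \<le> card (cb (Tb x) (Rb x))" using finite_cb card_mono by blast
  moreover have "card {x, y} = 2" using `x \<noteq> y` by simp
  moreover have "card (cb (Tb x) (Rb x)) \<le> 1" using red by blast
  ultimately show False by simp
qed

lemma consistent_cb:
  assumes cons: "\<forall>x\<in>D. Tb x < Rb x"
  shows "card (cb u w) \<le> 1"
proof -
  have inv: "1 \<le> a \<Longrightarrow> a + b \<le> m \<Longrightarrow> \<forall>u w. card (cb u w \<inter> proc a b) \<le> 1" for a b
  proof (induction a b rule: cut_induct)
    case init then show ?case using proc_init by simp
  next
    case (step a b)
    note pr = proc_step[OF step.hyps(1-3)]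
    show ?case
    proof (intro allI)
      fix u w
      show "card (cb u w \<inter> proc a (b - 1)) \<le> 1"
      proof (cases "(a, b) \<in> cb u w")
        case False
        then have "cb u w \<inter> proc a (b - 1) = cb u w \<inter> proc a b" using pr by auto
        then show ?thesis using step.IH by simp
      next
        case True
        then have xD: "(a, b) \<in> D" by (simp add: cb_def)
        have T: "Tb (a, b) = S a b (a + b - 1)" using S_T[of b a] step.hyps by (simp add: Tb_def)
        have R: "Rb (a, b) = S a b (a + b)" using S_R by (simp add: Rb_def)
        have cbe: "cb u w = cb (Tb (a, b)) (Rb (a, b))" using True by (auto simp: cb_def)
        have lt: "Tb (a, b) < Rb (a, b)" using cons xD by blast
        have "\<not> odd (card (cb (Tb (a, b)) (Rb (a, b)) \<inter> proc a b))"
          using PI_all[OF step.hyps(1,3)] step.hyps lt T R unfolding PI_def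
          by (metis (no_types, lifting) Nat.add_diff_assoc2 add_diff_cancel_right' le_add2 le_trans less_add_one
              not_less_iff_gr_or_eq plus_1_eq_Suc)
        moreover have "card (cb (Tb (a, b)) (Rb (a, b)) \<inter> proc a b) \<le> 1" using step.IH by blast
        ultimately have "card (cb (Tb (a, b)) (Rb (a, b)) \<inter> proc a b) = 0"
          by (metis le_SucE le_zero_eq odd_one One_nat_def)
        then have e: "cb u w \<inter> proc a b = {}" using cbe finite_cb by simp
        have "cb u w \<inter> proc a (b - 1) = {(a, b)}" using pr e True by auto
        then show ?thesis by simp
      qed
    qed
  next
    case (row a)
    then show ?case using proc_row by simp
  qed
  have "cb u w \<subseteq> proc m 0" using Dst proc_final by (auto simp: cb_def)
  then have e: "cb u w \<inter> proc m 0 = cb u w" by auto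
  have "card (cb u w \<inter> proc m 0) \<le> 1" using inv[of m 0] m1 by auto
  then show ?thesis using e by simp
qed

lemma final_parity:
  assumes "1 \<le> p" "p < p'" "p' \<le> m"
  shows "L p' 0 False < L p 0 False \<longleftrightarrow> odd (card (cb (L p 0 False) (L p' 0 False)))"
proof -
  have "cb u w \<subseteq> proc m 0" for u w using Dst proc_final by (auto simp: cb_def)
  then have e: "cb u w \<inter> proc m 0 = cb u w" for u w by auto
  show ?thesis using PI_all[of m 0] m1 assms S_final e unfolding PI_def by auto
qed

lemma exit_bij: "bij_betw (\<lambda>p. L p 0 False) {1..m} {1..m}"
proof -
  have "bij_betw (S m 0) {1..m} {1..m}" using S_bij[of m 0] m1 by simp
  moreover have "\<forall>p\<in>{1..m}. S m 0 p = L p 0 False" using S_final by simp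
  ultimately show ?thesis using bij_betw_cong[of "{1..m}" "S m 0" "\<lambda>p. L p 0 False"] by auto
qed

definition pre :: "nat \<Rightarrow> nat \<Rightarrow> nat \<Rightarrow> nat set" where "pre a b P = S a b ` {1..P}"

lemma pre_step_keep:
  assumes "1 \<le> a" "1 \<le> b" "a + b \<le> m" "a + b \<le> P \<or> P < a + b - 1"
  shows "pre a (b - 1) P = pre a b P"
proof (cases "(a, b) \<in> D")
  case True
  have "S a (b - 1) = S a b \<circ> sw (a + b - 1)" using S_step[OF assms(1-3)] True by auto
  moreover have "sw (a + b - 1) ` {1..P} = {1..P}" using sw_image[of "a + b - 1" P] assms by auto
  moreover have "(S a b \<circ> sw (a + b - 1)) ` {1..P} = S a b ` (sw (a + b - 1) ` {1..P})"
    by (simp add: image_comp)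
  ultimately show ?thesis unfolding pre_def by simp
next
  case False
  have "S a (b - 1) = S a b" using S_step[OF assms(1-3)] False by auto
  then show ?thesis by (simp add: pre_def)
qed

lemma pre_row_A1:
  assumes "1 \<le> a" "b1 \<le> b2" "a + b2 \<le> m" "a + b2 \<le> P"
  shows "pre a b1 P = pre a b2 P"
proof -
  have "d \<le> b2 \<Longrightarrow> pre a (b2 - d) P = pre a b2 P" for d
  proof (induction d)
    case 0 then show ?case by simp
  next
    case (Suc d)
    have f: "b2 - d - 1 = b2 - Suc d" "1 \<le> b2 - d" "a + (b2 - d) \<le> m" "a + (b2 - d) \<le> P"
      using Suc.prems assms by auto
    have "pre a (b2 - Suc d) P = pre a (b2 - d) P"
      using pre_step_keep[of a "b2 - d" P] f assms by simp
    then show ?case using Suc by simp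
  qed
  from this[of "b2 - b1"] show ?thesis using assms by simp
qed

lemma pre_row_A2:
  assumes "1 \<le> a" "b1 \<le> b2" "a + b2 \<le> m" "P < a + b1"
  shows "pre a b1 P = pre a b2 P"
proof -
  have "d \<le> b2 - b1 \<Longrightarrow> pre a (b2 - d) P = pre a b2 P" for d
  proof (induction d)
    case 0 then show ?case by simp
  next
    case (Suc d)
    have f: "b2 - d - 1 = b2 - Suc d" "1 \<le> b2 - d" "a + (b2 - d) \<le> m" "P < a + (b2 - d) - 1"
      using Suc.prems assms by auto
    have "pre a (b2 - Suc d) P = pre a (b2 - d) P"
      using pre_step_keep[of a "b2 - d" P] f assms by simp
    then show ?case using Suc by simp
  qed
  from this[of "b2 - b1"] show ?thesis using assms by simp
qed

lemma pre_row_trans: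
  assumes "1 \<le> a" "a + 1 \<le> m" "P \<le> m"
  shows "pre a 0 P = pre (a + 1) (m - a - 1) P"
  unfolding pre_def using S_row[OF assms(1,2)] assms(3) by (intro image_cong) auto

lemma pre_Suc: "pre a b (Suc P) = insert (S a b (Suc P)) (pre a b P)"
  unfolding pre_def by (auto simp: atLeastAtMostSuc_conv)

definition Lset :: "nat \<Rightarrow> nat \<Rightarrow> nat set" where
  "Lset a b = (if a = 0 then {1..b} else pre a b (a + b))"

lemma pre_first_row: "p \<le> b \<Longrightarrow> pre 1 b p = {1..p}"
proof -
  assume "p \<le> b"
  then have "\<forall>x\<in>{1..p}. S 1 b x = x" using S_mid[of 1 _ b] labT1 by auto
  then show ?thesis unfolding pre_def by simp
qed

lemma K1:
  assumes "1 \<le> a" "a + b + 1 \<le> m"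
  shows "Lset (a - 1) b = pre a (b + 1) (a + b - 1)"
proof (cases "a = 1")
  case True
  then show ?thesis using pre_first_row[of b "b + 1"] by (simp add: Lset_def)
next
  case False
  have a2: "1 \<le> a - 1" "a - 1 + 1 \<le> m" using assms False by auto
  have "Lset (a - 1) b = pre (a - 1) b (a - 1 + b)" using False assms by (simp add: Lset_def)
  also have "\<dots> = pre (a - 1) 0 (a - 1 + b)" using pre_row_A1[of "a - 1" 0 b "a - 1 + b"] a2 assms by simp
  also have "\<dots> = pre a (m - a) (a - 1 + b)" using pre_row_trans[OF a2] assms a2 by simp
  also have "\<dots> = pre a (b + 1) (a - 1 + b)" using pre_row_A2[of a "b + 1" "m - a" "a - 1 + b"] assms by simp
  finally show ?thesis using assms by (simp add: add.commute)
qed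

lemma K2:
  assumes "1 \<le> a" "a + b + 1 \<le> m"
  shows "Lset (a - 1) (b + 1) = pre a (b + 1) (a + b)"
proof (cases "a = 1")
  case True
  then show ?thesis using pre_first_row[of "b + 1" "b + 1"] by (simp add: Lset_def)
next
  case False
  have a2: "1 \<le> a - 1" "a - 1 + 1 \<le> m" using assms False by auto
  have "Lset (a - 1) (b + 1) = pre (a - 1) (b + 1) (a + b)" using False assms by (simp add: Lset_def)
  also have "\<dots> = pre (a - 1) 0 (a + b)" using pre_row_A1[of "a - 1" 0 "b + 1" "a + b"] a2 assms by simp
  also have "\<dots> = pre a (m - a) (a + b)" using pre_row_trans[OF a2] assms a2 by simp
  also have "\<dots> = pre a (b + 1) (a + b)" using pre_row_A2[of a "b + 1" "m - a" "a + b"] assms by simp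
  finally show ?thesis .
qed

definition Rk :: "nat \<Rightarrow> nat \<Rightarrow> nat \<Rightarrow> nat" where "Rk a b q = cnt (Lset a b) q"

lemma finite_pre: "finite (pre a b P)" by (simp add: pre_def)

lemma Rk_rec:
  assumes a: "1 \<le> a" "a + b + 1 \<le> m"
  defines "u \<equiv> Tb (a, b + 1)" and "w \<equiv> Rb (a, b + 1)"
  shows "Rk (a - 1) (b + 1) q = Rk (a - 1) b q + (if u \<le> q then 1 else 0)"
    and "Rk a (b + 1) q = Rk (a - 1) b q + (if u \<le> q then 1 else 0) + (if w \<le> q then 1 else 0)"
    and "Rk a b q = Rk (a - 1) b q + (if (if (a, b + 1) \<in> D then w else u) \<le> q then 1 else 0)"
proof -
  have h: "1 \<le> b + 1" "a + (b + 1) \<le> m" using a by auto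
  have Su: "S a (b + 1) (a + b) = u" using S_T[of "b + 1" a] by (simp add: u_def Tb_def)
  have Sw: "S a (b + 1) (a + b + 1) = w" using S_R[of a "b + 1"] by (simp add: w_def Rb_def)
  have P1: "pre a (b + 1) (a + b) = insert u (pre a (b + 1) (a + b - 1))"
    using pre_Suc[of a "b + 1" "a + b - 1"] Su a by (simp add: Suc_diff_le)
  have P2: "pre a (b + 1) (a + b + 1) = insert w (pre a (b + 1) (a + b))"
    using pre_Suc[of a "b + 1" "a + b"] Sw by simp
  have un: "u \<notin> pre a (b + 1) (a + b - 1)"
  proof
    assume "u \<in> pre a (b + 1) (a + b - 1)"
    then obtain p where p: "p \<in> {1..a + b - 1}" "S a (b + 1) p = u" by (auto simp: pre_def)
    then have "p = a + b" using S_inj[OF a(1) h(2), of p "a + b"] Su a by auto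
    then show False using p by auto
  qed
  have wn: "w \<notin> pre a (b + 1) (a + b)"
  proof
    assume "w \<in> pre a (b + 1) (a + b)"
    then obtain p where p: "p \<in> {1..a + b}" "S a (b + 1) p = w" by (auto simp: pre_def)
    then have "p = a + b + 1" using S_inj[OF a(1) h(2), of p "a + b + 1"] Sw a by auto
    then show False using p by auto
  qed
  have L1: "Lset (a - 1) b = pre a (b + 1) (a + b - 1)" using K1[OF a] .
  have L2: "Lset (a - 1) (b + 1) = pre a (b + 1) (a + b)" using K2[OF a] .
  have L3: "Lset a (b + 1) = pre a (b + 1) (a + b + 1)" using a by (simp add: Lset_def)
  show "Rk (a - 1) (b + 1) q = Rk (a - 1) b q + (if u \<le> q then 1 else 0)"
    unfolding Rk_def L1 L2 P1 using cnt_insert[OF finite_pre un] by simp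
  show "Rk a (b + 1) q = Rk (a - 1) b q + (if u \<le> q then 1 else 0) + (if w \<le> q then 1 else 0)"
    unfolding Rk_def L1 L3 P2 P1 using cnt_insert[OF finite_pre un] cnt_insert[OF _ wn] finite_pre P1
    by (metis finite_insert)
  have L4: "Lset a b = insert (if (a, b + 1) \<in> D then w else u) (pre a (b + 1) (a + b - 1))"
  proof -
    have Lab: "Lset a b = pre a b (a + b)" using a by (simp add: Lset_def)
    have st: "S a b p = (if (a, b + 1) \<in> D then S a (b + 1) (sw (a + b) p) else S a (b + 1) p)" for p
      using S_step[OF a(1) h(1) h(2), of p] by simp
    have same: "pre a b (a + b - 1) = pre a (b + 1) (a + b - 1)"
      unfolding pre_def using st by (intro image_cong) (auto simp: sw_def)
    have "pre a b (a + b) = insert (S a b (a + b)) (pre a b (a + b - 1))"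
      using pre_Suc[of a b "a + b - 1"] a by (simp add: Suc_diff_le)
    moreover have "S a b (a + b) = (if (a, b + 1) \<in> D then w else u)"
      using st[of "a + b"] Su Sw by (simp add: sw_def)
    ultimately show ?thesis using Lab same by simp
  qed
  have nn: "(if (a, b + 1) \<in> D then w else u) \<notin> pre a (b + 1) (a + b - 1)"
    using un wn P1 by auto
  show "Rk a b q = Rk (a - 1) b q + (if (if (a, b + 1) \<in> D then w else u) \<le> q then 1 else 0)"
    unfolding Rk_def L4 L1 using cnt_insert[OF finite_pre nn] by simp
qed

lemma Rk_top: "Rk 0 b q = min b q"
  using cnt_interval[of b q] by (simp add: Rk_def Lset_def)

lemma Rk_hyp: "1 \<le> a \<Longrightarrow> a + b = m \<Longrightarrow> Rk a b q = min m q"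
proof -
  assume h: "1 \<le> a" "a + b = m"
  have "S a b ` {1..m} = {1..m}" using S_bij[of a b] h unfolding bij_betw_def by simp
  then show ?thesis using h cnt_interval[of m q] by (simp add: Rk_def Lset_def pre_def)
qed

lemma Rk_left: "1 \<le> p \<Longrightarrow> p \<le> m \<Longrightarrow> Rk p 0 q = cnt ((\<lambda>r. L r 0 False) ` {1..p}) q"
proof -
  assume h: "1 \<le> p" "p \<le> m"
  have "S p 0 ` {1..p} = (\<lambda>r. L r 0 False) ` {1..p}"
  proof (rule image_cong)
    fix r assume "r \<in> {1..p}"
    then show "S p 0 r = L r 0 False" by (auto simp: S_def)
  qed simp
  then show ?thesis using h by (simp add: Rk_def Lset_def pre_def)
qed

end


function rho :: "nat \<Rightarrow> nat \<Rightarrow> (nat \<times> nat) set \<Rightarrow> nat \<Rightarrow> nat \<Rightarrow> int" where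
  "rho m q U a b = (if a = 0 then int (min b q) else if m \<le> a + b then int (min m q)
     else if (a, b + 1) \<in> U then max (rho m q U (a - 1) b) (rho m q U a (b + 1) - 1)
     else rho m q U (a - 1) (b + 1))"
  by pat_completeness auto
termination
  by (relation "measures [\<lambda>(m,q,U,a,b). a, \<lambda>(m,q,U,a,b). m - b]") auto

declare rho.simps[simp del]

lemma rho_top: "rho m q U 0 b = int (min b q)" by (simp add: rho.simps)
lemma rho_hyp: "1 \<le> a \<Longrightarrow> m \<le> a + b \<Longrightarrow> rho m q U a b = int (min m q)" by (simp add: rho.simps)
lemma rho_in: "1 \<le> a \<Longrightarrow> a + b + 1 \<le> m \<Longrightarrow> (a, b + 1) \<in> U \<Longrightarrow>
    rho m q U a b = max (rho m q U (a - 1) b) (rho m q U a (b + 1) - 1)"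
  by (simp add: rho.simps[of m q U a b])
lemma rho_out: "1 \<le> a \<Longrightarrow> a + b + 1 \<le> m \<Longrightarrow> (a, b + 1) \<notin> U \<Longrightarrow>
    rho m q U a b = rho m q U (a - 1) (b + 1)"
  by (simp add: rho.simps[of m q U a b])

function dl :: "nat \<Rightarrow> (nat \<times> nat) set \<Rightarrow> nat \<Rightarrow> nat \<Rightarrow> bool \<Rightarrow> nat" where
  "dl m U a b True = (if a \<le> 1 then b
      else if (a - 1, b) \<in> U \<and> dl m U (a - 1) b True < dl m U (a - 1) b False then dl m U (a - 1) b True
      else dl m U (a - 1) b False)"
| "dl m U a b False = (if m < a + b then 0
      else if (a, b + 1) \<in> U \<and> dl m U a (b + 1) True < dl m U a (b + 1) False then dl m U a (b + 1) False
      else dl m U a (b + 1) True)"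
  by pat_completeness auto
termination
  by (relation "measure (\<lambda>(m,U,a,b,ft). 2*a + 2*(m+1-b) + (if ft then 1 else 0))") auto

declare dl.simps[simp del]

definition Dm :: "nat \<Rightarrow> (nat \<times> nat) set \<Rightarrow> (nat \<times> nat) set" where
  "Dm m U = {x \<in> U. dl m U (fst x) (snd x) True < dl m U (fst x) (snd x) False}"

lemma lab_Dm: "D = Dm m U \<Longrightarrow> lab m D a b ft = dl m U a b ft"
proof (induction m D a b ft rule: lab.induct)
  case (1 m D a b)
  have mem: "(a - 1, b) \<in> D \<longleftrightarrow> (a - 1, b) \<in> U \<and> dl m U (a - 1) b True < dl m U (a - 1) b False"
    using 1(3) by (simp add: Dm_def)
  show ?case
  proof (cases "a \<le> 1")
    case True then show ?thesis by (simp add: lab.simps(1) dl.simps(1))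
  next
    case False
    show ?thesis
    proof (cases "(a - 1, b) \<in> D")
      case True
      then show ?thesis using 1(1)[OF False True 1(3)] False mem
        by (simp add: lab.simps(1)[of m D a b] dl.simps(1)[of m U a b])
    next
      case F: False
      then show ?thesis using 1(2)[OF False F 1(3)] False mem
        by (simp add: lab.simps(1)[of m D a b] dl.simps(1)[of m U a b])
    qed
  qed
next
  case (2 m D a b)
  have mem: "(a, b + 1) \<in> D \<longleftrightarrow> (a, b + 1) \<in> U \<and> dl m U a (b + 1) True < dl m U a (b + 1) False"
    using 2(3) by (simp add: Dm_def)
  show ?case
  proof (cases "m < a + b")
    case True then show ?thesis by (simp add: lab.simps(2) dl.simps(2))
  next
    case False
    show ?thesis
    proof (cases "(a, b + 1) \<in> D")
      case True
      then show ?thesis using 2(1)[OF False True 2(3)] False mem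
        by (simp add: lab.simps(2)[of m D a b] dl.simps(2)[of m U a b])
    next
      case F: False
      then show ?thesis using 2(2)[OF False F 2(3)] False mem
        by (simp add: lab.simps(2)[of m D a b] dl.simps(2)[of m U a b])
    qed
  qed
qed

context pdm
begin

lemma TR_distinct:
  assumes "x \<in> staircase m"
  shows "Tb x \<noteq> Rb x"
proof -
  obtain a b where x: "x = (a, b)" by fastforce
  have h: "1 \<le> a" "1 \<le> b" "a + b \<le> m" using assms x by (auto simp: staircase_def)
  have T: "Tb x = S a b (a + b - 1)" using S_T[of b a] h x by (simp add: Tb_def)
  have R: "Rb x = S a b (a + b)" using S_R x by (simp add: Rb_def)
  have r: "a + b - 1 \<in> {1..m}" "a + b \<in> {1..m}" using h by auto
  show ?thesis using T R S_inj[OF h(1) h(3) r] h by auto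
qed

lemma Rk_rho:
  assumes U: "U \<subseteq> staircase m"
    and cons1: "\<forall>x\<in>D. x \<in> U \<and> Tb x < Rb x"
    and cons2: "\<forall>x\<in>U. x \<notin> D \<longrightarrow> Rb x < Tb x"
  shows "a + b \<le> m \<Longrightarrow> int (Rk a b q) = rho m q U a b"
proof (induction a arbitrary: b)
  case 0
  then show ?case using Rk_top rho_top by simp
next
  case (Suc a')
  define a where "a = Suc a'"
  have inner: "\<forall>b. m - a - b = d \<longrightarrow> a + b \<le> m \<longrightarrow> int (Rk a b q) = rho m q U a b" for d
  proof (induction d)
    case 0
    show ?case
    proof (intro allI impI)
      fix b assume "m - a - b = 0" "a + b \<le> m"
      then have "a + b = m" by simp
      then show "int (Rk a b q) = rho m q U a b" using Rk_hyp[of a b q] rho_hyp[of a m b q U] a_def by simp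
    qed
  next
    case (Suc d)
    show ?case
    proof (intro allI impI)
      fix b assume d: "m - a - b = Suc d" "a + b \<le> m"
      have a1: "1 \<le> a" "a + b + 1 \<le> m" using d a_def by auto
      have IHb: "int (Rk a (b + 1) q) = rho m q U a (b + 1)" using Suc.IH d by auto
      have IH1: "int (Rk (a - 1) b q) = rho m q U (a - 1) b" using Suc.IH a_def a1 Suc(1) \<open>\<And>b. a' + b \<le> m \<Longrightarrow> int (Rk a' b q) = rho m q U a' b\<close> by simp
      have IH2: "int (Rk (a - 1) (b + 1) q) = rho m q U (a - 1) (b + 1)"
        using \<open>\<And>b. a' + b \<le> m \<Longrightarrow> int (Rk a' b q) = rho m q U a' b\<close> a_def a1 by simp
      define u where "u = Tb (a, b + 1)"
      define w where "w = Rb (a, b + 1)"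
      note R = Rk_rec[OF a1, of q, folded u_def w_def]
      have xs: "(a, b + 1) \<in> staircase m" using a1 by (simp add: staircase_def)
      have uw: "u \<noteq> w" using TR_distinct[OF xs] by (simp add: u_def w_def)
      show "int (Rk a b q) = rho m q U a b"
      proof (cases "(a, b + 1) \<in> U")
        case True
        have rr: "rho m q U a b = max (rho m q U (a - 1) b) (rho m q U a (b + 1) - 1)"
          using rho_in[OF a1 True] .
        show ?thesis
        proof (cases "(a, b + 1) \<in> D")
          case True
          then have "u < w" using cons1 by (simp add: u_def w_def)
          then show ?thesis using rr R(2,3) IH1 IHb True by (auto split: if_splits)
        next
          case False
          then have "w < u" using cons2 \<open>(a, b + 1) \<in> U\<close> by (simp add: u_def w_def)
          then show ?thesis using rr R(2,3) IH1 IHb False by (auto split: if_splits)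
        qed
      next
        case False
        have "(a, b + 1) \<notin> D" using cons1 False by blast
        then show ?thesis using rho_out[OF a1 False] R(1,3) IH1 IH2 by auto
      qed
    qed
  qed
  show ?case using inner[of "m - a - b"] Suc.prems a_def by simp
qed

end


context pdm
begin

lemma Lset_sub: "a + b \<le> m \<Longrightarrow> Lset a b \<subseteq> {1..m} \<and> card (Lset a b) \<le> a + b"
proof (cases "a = 0")
  case True
  then show "a + b \<le> m \<Longrightarrow> ?thesis" by (auto simp: Lset_def)
next
  case False
  assume h: "a + b \<le> m"
  have "S a b ` {1..a + b} \<subseteq> {1..m}" using S_range[of a b] h False by auto
  moreover have "card (S a b ` {1..a + b}) \<le> a + b" using card_image_le[of "{1..a+b}" "S a b"] by simp
  ultimately show ?thesis using False by (simp add: Lset_def pre_def)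
qed

lemma Rk_le: "a + b \<le> m \<Longrightarrow> Rk a b q \<le> q \<and> Rk a b q \<le> a + b"
proof -
  assume h: "a + b \<le> m"
  note ls = Lset_sub[OF h]
  have "{x \<in> Lset a b. x \<le> q} \<subseteq> {1..q}" using ls by auto
  then have "card {x \<in> Lset a b. x \<le> q} \<le> q" using card_mono[of "{1..q}"] by fastforce
  moreover have "card {x \<in> Lset a b. x \<le> q} \<le> card (Lset a b)"
    using ls by (intro card_mono) (auto intro: finite_subset)
  ultimately show ?thesis using ls by (simp add: Rk_def cnt_def)
qed

end

lemma Dm_pdm: "U \<subseteq> staircase m \<Longrightarrow> 1 \<le> m \<Longrightarrow> pdm m (Dm m U)"
  by unfold_locales (auto simp: Dm_def)

lemma rho_Rk_Dm:
  assumes U: "U \<subseteq> staircase m" and m: "1 \<le> m" and ab: "a + b \<le> m"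
  shows "rho m q U a b = int (pdm.Rk m (Dm m U) a b q)"
proof -
  interpret P: pdm m "Dm m U" using Dm_pdm[OF U m] .
  have lab: "lab m (Dm m U) a' b' ft = dl m U a' b' ft" for a' b' ft using lab_Dm by blast
  have c1: "\<forall>x\<in>Dm m U. x \<in> U \<and> P.Tb x < P.Rb x"
  proof
    fix x assume x: "x \<in> Dm m U"
    have "P.Tb x < P.Rb x" unfolding P.Tb_def P.Rb_def lab using x by (simp add: Dm_def)
    then show "x \<in> U \<and> P.Tb x < P.Rb x" using x by (simp add: Dm_def)
  qed
  have c2: "\<forall>x\<in>U. x \<notin> Dm m U \<longrightarrow> P.Rb x < P.Tb x"
  proof (intro ballI impI)
    fix x assume x: "x \<in> U" "x \<notin> Dm m U"
    then have "\<not> P.Tb x < P.Rb x" unfolding P.Tb_def P.Rb_def lab by (simp add: Dm_def)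
    moreover have "P.Tb x \<noteq> P.Rb x" using P.TR_distinct x U by blast
    ultimately show "P.Rb x < P.Tb x" by simp
  qed
  show ?thesis using P.Rk_rho[OF U c1 c2 ab] by simp
qed

lemma rho_bounds:
  assumes U: "U \<subseteq> staircase m" and m: "1 \<le> m" and ab: "a + b \<le> m"
  shows "0 \<le> rho m q U a b \<and> rho m q U a b \<le> int q \<and> rho m q U a b \<le> int (a + b)"
proof -
  interpret P: pdm m "Dm m U" using Dm_pdm[OF U m] .
  show ?thesis using rho_Rk_Dm[OF U m ab, of q] P.Rk_le[OF ab, of q] by simp
qed

lemma rho_lip:
  assumes U: "U \<subseteq> staircase m" and m: "1 \<le> m" and a: "1 \<le> a" "a + b + 1 \<le> m"
  shows "rho m q U (a - 1) b \<le> rho m q U (a - 1) (b + 1)"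
    and "rho m q U (a - 1) (b + 1) \<le> rho m q U (a - 1) b + 1"
    and "rho m q U (a - 1) (b + 1) \<le> rho m q U a (b + 1)"
    and "rho m q U a (b + 1) \<le> rho m q U (a - 1) (b + 1) + 1"
proof -
  interpret P: pdm m "Dm m U" using Dm_pdm[OF U m] .
  have e1: "rho m q U (a - 1) b = int (P.Rk (a - 1) b q)" using rho_Rk_Dm[OF U m] a by simp
  have e2: "rho m q U (a - 1) (b + 1) = int (P.Rk (a - 1) (b + 1) q)" using rho_Rk_Dm[OF U m] a by simp
  have e3: "rho m q U a (b + 1) = int (P.Rk a (b + 1) q)" using rho_Rk_Dm[OF U m] a by simp
  note R = P.Rk_rec[OF a, of q]
  show "rho m q U (a - 1) b \<le> rho m q U (a - 1) (b + 1)" using e1 e2 R(1) by simp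
  show "rho m q U (a - 1) (b + 1) \<le> rho m q U (a - 1) b + 1" using e1 e2 R(1) by simp
  show "rho m q U (a - 1) (b + 1) \<le> rho m q U a (b + 1)" using e2 e3 R(1,2) by simp
  show "rho m q U a (b + 1) \<le> rho m q U (a - 1) (b + 1) + 1" using e2 e3 R(1,2) by simp
qed

lemma rho_mono:
  assumes U2: "U2 \<subseteq> staircase m" and U12: "U1 \<subseteq> U2" and m: "1 \<le> m"
  shows "a + b \<le> m \<Longrightarrow> rho m q U2 a b \<le> rho m q U1 a b"
proof (induction a arbitrary: b)
  case 0 then show ?case by (simp add: rho_top)
next
  case (Suc a')
  define a where "a = Suc a'"
  have U1: "U1 \<subseteq> staircase m" using U12 U2 by blast
  have inner: "\<forall>b. m - a - b = d \<longrightarrow> a + b \<le> m \<longrightarrow> rho m q U2 a b \<le> rho m q U1 a b" for d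
  proof (induction d)
    case 0
    show ?case
    proof (intro allI impI)
      fix b assume "m - a - b = 0" "a + b \<le> m"
      then show "rho m q U2 a b \<le> rho m q U1 a b" using rho_hyp[of a m b] a_def by simp
    qed
  next
    case (Suc d)
    show ?case
    proof (intro allI impI)
      fix b assume d: "m - a - b = Suc d" "a + b \<le> m"
      have a1: "1 \<le> a" "a + b + 1 \<le> m" using d a_def by auto
      have IHb: "rho m q U2 a (b + 1) \<le> rho m q U1 a (b + 1)" using Suc.IH d by auto
      have IH1: "rho m q U2 (a - 1) b \<le> rho m q U1 (a - 1) b"
        using \<open>\<And>b. a' + b \<le> m \<Longrightarrow> rho m q U2 a' b \<le> rho m q U1 a' b\<close> a_def a1 by simp
      have IH2: "rho m q U2 (a - 1) (b + 1) \<le> rho m q U1 (a - 1) (b + 1)"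
        using \<open>\<And>b. a' + b \<le> m \<Longrightarrow> rho m q U2 a' b \<le> rho m q U1 a' b\<close> a_def a1 by simp
      note L = rho_lip[OF U1 m a1, of q]
      show "rho m q U2 a b \<le> rho m q U1 a b"
      proof (cases "(a, b + 1) \<in> U1")
        case True
        then have "(a, b + 1) \<in> U2" using U12 by blast
        then show ?thesis using rho_in[OF a1 True] rho_in[OF a1, of U2] max.mono[OF IH1, of "rho m q U2 a (b + 1) - 1" "rho m q U1 a (b + 1) - 1"] IHb by simp
      next
        case F1: False
        show ?thesis
        proof (cases "(a, b + 1) \<in> U2")
          case True
          then show ?thesis using rho_in[OF a1 True] rho_out[OF a1 F1] IH1 IHb L by simp
        next
          case False
          then show ?thesis using rho_out[OF a1 False] rho_out[OF a1 F1] IH2 by simp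
        qed
      qed
    qed
  qed
  show ?case using inner[of "m - a - b"] Suc.prems a_def by simp
qed

lemma rho_G:
  assumes U: "U \<subseteq> staircase m" and m: "1 \<le> m"
  shows "a' \<le> a \<Longrightarrow> b \<le> b' \<Longrightarrow> a + b \<le> m \<Longrightarrow> a' + b' \<le> m \<Longrightarrow>
    (\<forall>y. b < y \<and> y \<le> b' \<and> a + y \<le> m \<longrightarrow> (a, y) \<in> U) \<Longrightarrow>
    (\<forall>x. a' < x \<and> x \<le> a \<and> x + b' + 1 \<le> m \<longrightarrow> (x, b' + 1) \<in> U) \<Longrightarrow>
    rho m q U a' b' - int (b' - b) \<le> rho m q U a b"
proof (induction "(b' - b) + (a - a')" arbitrary: a b)
  case 0
  then have "a' = a" "b' = b" by auto
  then show ?case by simp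
next
  case (Suc N)
  show ?case
  proof (cases "a = 0")
    case True
    then have "a' = 0" using Suc.prems by simp
    then show ?thesis using True Suc.prems by (simp add: rho_top)
  next
    case a0: False
    show ?thesis
    proof (cases "m \<le> a + b")
      case True
      have "rho m q U a b = int (min m q)" using rho_hyp[of a m b] a0 True by simp
      moreover have "rho m q U a' b' \<le> int q" using rho_bounds[OF U m Suc.prems(4)] by simp
      moreover have "rho m q U a' b' \<le> int m"
      proof -
        have "rho m q U a' b' \<le> int (a' + b')" using rho_bounds[OF U m Suc.prems(4)] by blast
        then show ?thesis using Suc.prems(4) by linarith
      qed
      ultimately show ?thesis by simp
    next
      case nh: False
      have a1: "1 \<le> a" "a + b + 1 \<le> m" using a0 nh by auto
      show ?thesis
      proof (cases "b < b'")
        case True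
        have inU: "(a, b + 1) \<in> U" using Suc.prems(5) True a1 by simp
        have "rho m q U a' b' - int (b' - (b + 1)) \<le> rho m q U a (b + 1)"
          using Suc.hyps(1)[of "b + 1" a] Suc.hyps(2) Suc.prems True a1 by auto
        moreover have "rho m q U a (b + 1) - 1 \<le> rho m q U a b" using rho_in[OF a1 inU] by simp
        ultimately show ?thesis using True by simp
      next
        case False
        then have bb: "b = b'" using Suc.prems by simp
        then have aa: "a' < a" using Suc.hyps(2) by simp
        have inU: "(a, b + 1) \<in> U" using Suc.prems(6) aa a1 bb by simp
        have "rho m q U a' b' - int (b' - b) \<le> rho m q U (a - 1) b"
        proof (rule Suc.hyps(1)[of b "a - 1"])
          show "N = b' - b + (a - 1 - a')" using Suc.hyps(2) bb aa by simp
          show "a' \<le> a - 1" "b \<le> b'" "a - 1 + b \<le> m" "a' + b' \<le> m" using aa bb Suc.prems a1 by auto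
          show "\<forall>y. b < y \<and> y \<le> b' \<and> a - 1 + y \<le> m \<longrightarrow> (a - 1, y) \<in> U" using bb by auto
          show "\<forall>x. a' < x \<and> x \<le> a - 1 \<and> x + b' + 1 \<le> m \<longrightarrow> (x, b' + 1) \<in> U"
            using Suc.prems(6) by auto
        qed
        moreover have "rho m q U (a - 1) b \<le> rho m q U a b" using rho_in[OF a1 inU] by simp
        ultimately show ?thesis by simp
      qed
    qed
  qed
qed



definition reg :: "nat \<Rightarrow> nat \<Rightarrow> (nat \<times> nat) set" where
  "reg m k = {(a, b). 1 \<le> a \<and> 1 \<le> b \<and> k + 2 \<le> a + b \<and> a + b \<le> m}"

definition NE :: "nat \<times> nat \<Rightarrow> nat \<times> nat \<Rightarrow> bool" where
  "NE x y = (fst y < fst x \<and> snd x < snd y)"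

lemma reg_stair: "reg m k \<subseteq> staircase m" by (auto simp: reg_def staircase_def)

lemma sorted_NE_hd: "sorted_wrt NE ys \<Longrightarrow> y \<in> set ys \<Longrightarrow> fst y \<le> fst (hd ys) \<and> snd (hd ys) \<le> snd y"
  by (cases ys) (auto simp: NE_def)

lemma upper_inv:
  assumes U: "U \<subseteq> reg m k" and m: "1 \<le> m"
  shows "a + b \<le> m \<Longrightarrow> s \<le> k \<Longrightarrow>
    rho m q U a b \<le> max (int k) (max (int s + int b) (int a + int b + int q - int m)) \<or>
    (\<exists>xs. length xs = s + 1 \<and> set xs \<subseteq> reg m k - U \<and> sorted_wrt NE xs \<and>
       fst (hd xs) \<le> a \<and> b + 1 \<le> snd (hd xs) \<and> int (snd (last xs)) + rho m q U a b \<le> int (b + s + 1 + q))"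
proof (induction a arbitrary: b s)
  case 0
  have "int (min b q) \<le> int s + int b" by simp
  then show ?case by (intro disjI1) (simp add: rho_top le_max_iff_disj)
next
  case (Suc a')
  define a where "a = Suc a'"
  have Us: "U \<subseteq> staircase m" using U reg_stair by blast
  note IHa = Suc.IH
  have inner: "\<forall>b s. m - a - b = d \<longrightarrow> a + b \<le> m \<longrightarrow> s \<le> k \<longrightarrow>
    rho m q U a b \<le> max (int k) (max (int s + int b) (int a + int b + int q - int m)) \<or>
    (\<exists>xs. length xs = s + 1 \<and> set xs \<subseteq> reg m k - U \<and> sorted_wrt NE xs \<and>
       fst (hd xs) \<le> a \<and> b + 1 \<le> snd (hd xs) \<and> int (snd (last xs)) + rho m q U a b \<le> int (b + s + 1 + q))" for d
  proof (induction d)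
    case 0
    show ?case
    proof (intro allI impI)
      fix b s assume "m - a - b = 0" "a + b \<le> m" "s \<le> k"
      then have "a + b = m" by simp
      then show "rho m q U a b \<le> max (int k) (max (int s + int b) (int a + int b + int q - int m)) \<or>
    (\<exists>xs. length xs = s + 1 \<and> set xs \<subseteq> reg m k - U \<and> sorted_wrt NE xs \<and>
       fst (hd xs) \<le> a \<and> b + 1 \<le> snd (hd xs) \<and> int (snd (last xs)) + rho m q U a b \<le> int (b + s + 1 + q))"
      proof (intro disjI1)
        have "rho m q U a b = int (min m q)" using rho_hyp[of a m b q U] a_def \<open>a + b = m\<close> by simp
        also have "\<dots> \<le> int a + int b + int q - int m" using \<open>a + b = m\<close> by simp
        finally show "rho m q U a b \<le> max (int k) (max (int s + int b) (int a + int b + int q - int m))"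
          by (simp add: le_max_iff_disj)
      qed
    qed
  next
    case (Suc d)
    show ?case
    proof (intro allI impI)
      fix b s assume d: "m - a - b = Suc d" "a + b \<le> m" and sk: "s \<le> k"
      have a1: "1 \<le> a" "a + b + 1 \<le> m" using d a_def by auto
      define B where "B = max (int k) (max (int s + int b) (int a + int b + int q - int m))"
      define CH where "CH = (\<lambda>r. \<exists>xs. length xs = s + 1 \<and> set xs \<subseteq> reg m k - U \<and> sorted_wrt NE xs \<and>
       fst (hd xs) \<le> a \<and> b + 1 \<le> snd (hd xs) \<and> int (snd (last xs)) + r \<le> int (b + s + 1 + q))"
      have goal: "rho m q U a b \<le> B \<or> CH (rho m q U a b)"
      proof (cases "(a, b + 1) \<in> U")
        case True
        have rr: "rho m q U a b = max (rho m q U (a - 1) b) (rho m q U a (b + 1) - 1)"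
          using rho_in[OF a1 True] .
        show ?thesis
        proof (cases "rho m q U (a - 1) b \<le> rho m q U a (b + 1) - 1")
          case True
          then have e: "rho m q U a b = rho m q U a (b + 1) - 1" using rr by simp
          have IH: "rho m q U a (b + 1) \<le> max (int k) (max (int s + int (b + 1)) (int a + int (b + 1) + int q - int m)) \<or>
            (\<exists>xs. length xs = s + 1 \<and> set xs \<subseteq> reg m k - U \<and> sorted_wrt NE xs \<and>
            fst (hd xs) \<le> a \<and> b + 1 + 1 \<le> snd (hd xs) \<and> int (snd (last xs)) + rho m q U a (b + 1) \<le> int (b + 1 + s + 1 + q))"
          proof -
            have dd: "m - a - (b + 1) = d" using d by simp
            show ?thesis using Suc.IH[rule_format, OF dd, of s] a1 sk by simp
          qed
          then show ?thesis
          proof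
            assume "rho m q U a (b + 1) \<le> max (int k) (max (int s + int (b + 1)) (int a + int (b + 1) + int q - int m))"
            then have "rho m q U a b \<le> B" unfolding B_def e by (auto simp: le_max_iff_disj)
            then show ?thesis by simp
          next
            assume "\<exists>xs. length xs = s + 1 \<and> set xs \<subseteq> reg m k - U \<and> sorted_wrt NE xs \<and>
            fst (hd xs) \<le> a \<and> b + 1 + 1 \<le> snd (hd xs) \<and> int (snd (last xs)) + rho m q U a (b + 1) \<le> int (b + 1 + s + 1 + q)"
            then obtain xs where "length xs = s + 1 \<and> set xs \<subseteq> reg m k - U \<and> sorted_wrt NE xs \<and>
            fst (hd xs) \<le> a \<and> b + 1 + 1 \<le> snd (hd xs) \<and> int (snd (last xs)) + rho m q U a (b + 1) \<le> int (b + 1 + s + 1 + q)"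
              by blast
            then have "CH (rho m q U a b)" unfolding CH_def e by (intro exI[of _ xs]) auto
            then show ?thesis by simp
          qed
        next
          case False
          then have e: "rho m q U a b = rho m q U (a - 1) b" using rr by simp
          have IH: "rho m q U (a - 1) b \<le> max (int k) (max (int s + int b) (int (a - 1) + int b + int q - int m)) \<or>
            (\<exists>xs. length xs = s + 1 \<and> set xs \<subseteq> reg m k - U \<and> sorted_wrt NE xs \<and>
            fst (hd xs) \<le> a - 1 \<and> b + 1 \<le> snd (hd xs) \<and> int (snd (last xs)) + rho m q U (a - 1) b \<le> int (b + s + 1 + q))"
            using IHa[of b s] a_def a1 sk by simp
          then show ?thesis
          proof
            assume "rho m q U (a - 1) b \<le> max (int k) (max (int s + int b) (int (a - 1) + int b + int q - int m))"
            then have "rho m q U a b \<le> B" unfolding B_def e using a1 by (auto simp: le_max_iff_disj)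
            then show ?thesis by simp
          next
            assume "\<exists>xs. length xs = s + 1 \<and> set xs \<subseteq> reg m k - U \<and> sorted_wrt NE xs \<and>
            fst (hd xs) \<le> a - 1 \<and> b + 1 \<le> snd (hd xs) \<and> int (snd (last xs)) + rho m q U (a - 1) b \<le> int (b + s + 1 + q)"
            then obtain xs where "length xs = s + 1 \<and> set xs \<subseteq> reg m k - U \<and> sorted_wrt NE xs \<and>
            fst (hd xs) \<le> a - 1 \<and> b + 1 \<le> snd (hd xs) \<and> int (snd (last xs)) + rho m q U (a - 1) b \<le> int (b + s + 1 + q)"
              by blast
            then have "CH (rho m q U a b)" unfolding CH_def e by (intro exI[of _ xs]) auto
            then show ?thesis by simp
          qed
        qed
      next
        case nU: False
        have e: "rho m q U a b = rho m q U (a - 1) (b + 1)" using rho_out[OF a1 nU] .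
        show ?thesis
        proof (cases "(a, b + 1) \<in> reg m k")
          case False
          then have "a + b \<le> k" using a1 by (auto simp: reg_def)
          moreover have "rho m q U (a - 1) (b + 1) \<le> int (a - 1 + (b + 1))"
            using rho_bounds[OF Us m, of "a - 1" "b + 1" q] a1 by simp
          ultimately have "rho m q U a b \<le> int k" using e a1 by simp
          then show ?thesis unfolding B_def by (simp add: le_max_iff_disj)
        next
          case inreg: True
          show ?thesis
          proof (cases s)
            case 0
            have "rho m q U a b \<le> int q" using rho_bounds[OF Us m, of a b q] a1 by simp
            then have "CH (rho m q U a b)" unfolding CH_def using 0 inreg nU
              by (intro exI[of _ "[(a, b + 1)]"]) simp
            then show ?thesis by simp
          next
            case (Suc s')
            have IH: "rho m q U (a - 1) (b + 1) \<le> max (int k) (max (int s' + int (b + 1)) (int (a - 1) + int (b + 1) + int q - int m)) \<or>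
              (\<exists>xs. length xs = s' + 1 \<and> set xs \<subseteq> reg m k - U \<and> sorted_wrt NE xs \<and>
              fst (hd xs) \<le> a - 1 \<and> b + 1 + 1 \<le> snd (hd xs) \<and> int (snd (last xs)) + rho m q U (a - 1) (b + 1) \<le> int (b + 1 + s' + 1 + q))"
              using IHa[of "b + 1" s'] a_def a1 sk Suc by simp
            then show ?thesis
            proof
              assume "rho m q U (a - 1) (b + 1) \<le> max (int k) (max (int s' + int (b + 1)) (int (a - 1) + int (b + 1) + int q - int m))"
              then have "rho m q U a b \<le> B" unfolding B_def e using a1 Suc by (auto simp: le_max_iff_disj)
              then show ?thesis by simp
            next
              assume "\<exists>xs. length xs = s' + 1 \<and> set xs \<subseteq> reg m k - U \<and> sorted_wrt NE xs \<and>
              fst (hd xs) \<le> a - 1 \<and> b + 1 + 1 \<le> snd (hd xs) \<and> int (snd (last xs)) + rho m q U (a - 1) (b + 1) \<le> int (b + 1 + s' + 1 + q)"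
              then obtain ys where ys: "length ys = s' + 1" "set ys \<subseteq> reg m k - U" "sorted_wrt NE ys"
                "fst (hd ys) \<le> a - 1" "b + 1 + 1 \<le> snd (hd ys)"
                "int (snd (last ys)) + rho m q U (a - 1) (b + 1) \<le> int (b + 1 + s' + 1 + q)"
                by blast
              have ne: "ys \<noteq> []" using ys(1) by auto
              have "\<forall>y\<in>set ys. NE (a, b + 1) y"
              proof
                fix y assume "y \<in> set ys"
                then have "fst y \<le> fst (hd ys)" "snd (hd ys) \<le> snd y" using sorted_NE_hd[OF ys(3)] by auto
                then show "NE (a, b + 1) y" using ys(4,5) a1 by (auto simp: NE_def)
              qed
              then have "sorted_wrt NE ((a, b + 1) # ys)" using ys(3) by simp
              then have "CH (rho m q U a b)" unfolding CH_def e using ys ne inreg nU Suc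
                by (intro exI[of _ "(a, b + 1) # ys"]) auto
              then show ?thesis by simp
            qed
          qed
        qed
      qed
      then show "rho m q U a b \<le> max (int k) (max (int s + int b) (int a + int b + int q - int m)) \<or>
    (\<exists>xs. length xs = s + 1 \<and> set xs \<subseteq> reg m k - U \<and> sorted_wrt NE xs \<and>
       fst (hd xs) \<le> a \<and> b + 1 \<le> snd (hd xs) \<and> int (snd (last xs)) + rho m q U a b \<le> int (b + s + 1 + q))"
        unfolding B_def CH_def .
    qed
  qed
  show ?case using inner[of "m - a - b"] Suc.prems a_def by simp
qed



lemma lower_bound:
  assumes m: "1 \<le> m" and len: "length es = k + 1" and srt: "sorted_wrt NE es"
    and sub: "set es \<subseteq> reg m k" and corner: "fst (es ! 0) + snd (es ! k) \<le> m + k"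
  shows "int k + 1 \<le> rho m (m + k - fst (es ! 0)) (reg m k - set es) (fst (es ! 0)) 0"
proof -
  define r where "r t = fst (es ! t)" for t
  define c where "c t = snd (es ! t)" for t
  define U where "U = reg m k - set es"
  define q where "q = m + k - r 0"
  have Us: "U \<subseteq> staircase m" using reg_stair U_def by blast
  have mono: "s < t \<Longrightarrow> t \<le> k \<Longrightarrow> r t < r s \<and> c s < c t" for s t
    using srt len unfolding sorted_wrt_iff_nth_less r_def c_def NE_def by auto
  have inreg: "t \<le> k \<Longrightarrow> 1 \<le> r t \<and> 1 \<le> c t \<and> k + 2 \<le> r t + c t \<and> r t + c t \<le> m" for t
  proof -
    assume "t \<le> k"
    then have "es ! t \<in> reg m k" using sub len by auto
    then show ?thesis by (auto simp: reg_def r_def c_def split: prod.splits)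
  qed
  have cge: "t \<le> k \<Longrightarrow> t + 1 \<le> c t" for t
  proof (induction t)
    case 0 then show ?case using inreg[of 0] by simp
  next
    case (Suc t) then show ?case using mono[of t "Suc t"] by simp
  qed
  have rge: "t \<le> k \<Longrightarrow> r k + (k - t) \<le> r t" for t
  proof (induction "k - t" arbitrary: t)
    case 0 then show ?case by simp
  next
    case (Suc d)
    have h1: "r k + (k - Suc t) \<le> r (Suc t)" using Suc.hyps(1)[of "Suc t"] Suc.hyps(2) Suc.prems by simp
    have h2: "r (Suc t) < r t" using mono[of t "Suc t"] Suc.hyps(2) Suc.prems by simp
    have h3: "k - t = k - Suc t + 1" using Suc.hyps(2) by simp
    show ?case using h1 h2 h3 by linarith
  qed
  have r0: "k + 1 \<le> r 0" using rge[of 0] inreg[of k] by simp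
  have memes: "(x, y) \<in> set es \<Longrightarrow> \<exists>t\<le>k. r t = x \<and> c t = y" for x y
  proof -
    assume "(x, y) \<in> set es"
    then obtain t where "t < length es" "es ! t = (x, y)" by (auto simp: in_set_conv_nth)
    then show ?thesis using len by (intro exI[of _ t]) (auto simp: r_def c_def)
  qed
  have outU: "t \<le> k \<Longrightarrow> (r t, c t) \<notin> U" for t
    using len by (auto simp: U_def r_def c_def in_set_conv_nth intro!: exI[of _ t])
  have diag: "t \<le> k \<Longrightarrow> rho m q U (r t) (c t - 1) = rho m q U (r t - 1) (c t)" for t
  proof -
    assume t: "t \<le> k"
    note i = inreg[OF t]
    have "rho m q U (r t) (c t - 1) = rho m q U (r t - 1) (c t - 1 + 1)"
      using rho_out[of "r t" "c t - 1" m U q] i outU[OF t] by simp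
    then show ?thesis using i by simp
  qed
  have claim: "t \<le> k \<Longrightarrow> rho m q U (r t - 1) (c t) - (int (c t) - 1 - int t) \<le> rho m q U (r 0) 0" for t
  proof (induction t)
    case 0
    have "rho m q U (r 0) (c 0 - 1) - int (c 0 - 1 - 0) \<le> rho m q U (r 0) 0"
    proof (rule rho_G[OF Us m])
      show "r 0 \<le> r 0" "0 \<le> c 0 - 1" "r 0 + 0 \<le> m" "r 0 + (c 0 - 1) \<le> m" using inreg[of 0] by auto
      show "\<forall>y. 0 < y \<and> y \<le> c 0 - 1 \<and> r 0 + y \<le> m \<longrightarrow> (r 0, y) \<in> U"
      proof (intro allI impI)
        fix y assume y: "0 < y \<and> y \<le> c 0 - 1 \<and> r 0 + y \<le> m"
        have "(r 0, y) \<in> reg m k" using y r0 by (auto simp: reg_def)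
        moreover have "(r 0, y) \<notin> set es"
        proof
          assume "(r 0, y) \<in> set es"
          then obtain t where t: "t \<le> k" "r t = r 0" "c t = y" using memes by blast
          then have "t = 0" using mono[of 0 t] by (cases "t = 0") auto
          then show False using t y by auto
        qed
        ultimately show "(r 0, y) \<in> U" by (simp add: U_def)
      qed
      show "\<forall>x. r 0 < x \<and> x \<le> r 0 \<and> x + (c 0 - 1) + 1 \<le> m \<longrightarrow> (x, c 0 - 1 + 1) \<in> U" by auto
    qed
    then show ?case using diag[of 0] inreg[of 0] by simp
  next
    case (Suc t)
    have t: "t < k" using Suc.prems by simp
    note mt = mono[of t "Suc t"]
    have it: "1 \<le> r t \<and> 1 \<le> c t \<and> k + 2 \<le> r t + c t \<and> r t + c t \<le> m" using inreg[of t] t by simp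
    have it1: "1 \<le> r (Suc t) \<and> 1 \<le> c (Suc t) \<and> k + 2 \<le> r (Suc t) + c (Suc t) \<and> r (Suc t) + c (Suc t) \<le> m"
      using inreg[of "Suc t"] Suc.prems by simp
    have "rho m q U (r (Suc t)) (c (Suc t) - 1) - int (c (Suc t) - 1 - c t) \<le> rho m q U (r t - 1) (c t)"
    proof (rule rho_G[OF Us m])
      show "r (Suc t) \<le> r t - 1" "c t \<le> c (Suc t) - 1" "r t - 1 + c t \<le> m"
        "r (Suc t) + (c (Suc t) - 1) \<le> m" using mt t it it1 by auto
      show "\<forall>y. c t < y \<and> y \<le> c (Suc t) - 1 \<and> r t - 1 + y \<le> m \<longrightarrow> (r t - 1, y) \<in> U"
      proof (intro allI impI)
        fix y assume y: "c t < y \<and> y \<le> c (Suc t) - 1 \<and> r t - 1 + y \<le> m"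
        have "(r t - 1, y) \<in> reg m k" using y it mt t it1 by (auto simp: reg_def)
        moreover have "(r t - 1, y) \<notin> set es"
        proof
          assume "(r t - 1, y) \<in> set es"
          then obtain s where s: "s \<le> k" "c s = y" using memes by blast
          show False
          proof (cases "s \<le> t")
            case True
            then have "c s \<le> c t" using mono[of s t] t by (cases "s = t") auto
            then show False using s y by simp
          next
            case False
            then have "c (Suc t) \<le> c s" using mono[of "Suc t" s] s by (cases "s = Suc t") auto
            then show False using s y it1 by linarith
          qed
        qed
        ultimately show "(r t - 1, y) \<in> U" by (simp add: U_def)
      qed
      show "\<forall>x. r (Suc t) < x \<and> x \<le> r t - 1 \<and> x + (c (Suc t) - 1) + 1 \<le> m \<longrightarrow> (x, c (Suc t) - 1 + 1) \<in> U"
      proof (intro allI impI)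
        fix x assume x: "r (Suc t) < x \<and> x \<le> r t - 1 \<and> x + (c (Suc t) - 1) + 1 \<le> m"
        have e: "c (Suc t) - 1 + 1 = c (Suc t)" using it1 by simp
        have "(x, c (Suc t)) \<in> reg m k" using x it1 e by (auto simp: reg_def)
        moreover have "(x, c (Suc t)) \<notin> set es"
        proof
          assume "(x, c (Suc t)) \<in> set es"
          then obtain s where s: "s \<le> k" "r s = x" "c s = c (Suc t)" using memes by blast
          have "s = Suc t"
          proof (rule ccontr)
            assume "s \<noteq> Suc t"
            then have "s < Suc t \<or> Suc t < s" by auto
            then show False using mono[of s "Suc t"] mono[of "Suc t" s] s Suc.prems by auto
          qed
          then show False using s x by simp
        qed
        ultimately show "(x, c (Suc t) - 1 + 1) \<in> U" using e by (simp add: U_def)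
      qed
    qed
    moreover have "rho m q U (r (Suc t)) (c (Suc t) - 1) = rho m q U (r (Suc t) - 1) (c (Suc t))"
      using diag Suc.prems by simp
    moreover have "rho m q U (r t - 1) (c t) - (int (c t) - 1 - int t) \<le> rho m q U (r 0) 0"
      using Suc.IH t by simp
    ultimately show ?case using mt t it it1 by simp
  qed
  have fin: "rho m q U 0 (c k) - int (c k - c k) \<le> rho m q U (r k - 1) (c k)"
  proof (rule rho_G[OF Us m])
    have ik: "1 \<le> r k \<and> 1 \<le> c k \<and> k + 2 \<le> r k + c k \<and> r k + c k \<le> m" using inreg[of k] by simp
    show "0 \<le> r k - 1" "c k \<le> c k" "r k - 1 + c k \<le> m" "0 + c k \<le> m" using ik by auto
    show "\<forall>y. c k < y \<and> y \<le> c k \<and> r k - 1 + y \<le> m \<longrightarrow> (r k - 1, y) \<in> U" by auto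
    show "\<forall>x. 0 < x \<and> x \<le> r k - 1 \<and> x + c k + 1 \<le> m \<longrightarrow> (x, c k + 1) \<in> U"
    proof (intro allI impI)
      fix x assume x: "0 < x \<and> x \<le> r k - 1 \<and> x + c k + 1 \<le> m"
      have "(x, c k + 1) \<in> reg m k" using x cge[of k] by (auto simp: reg_def)
      moreover have "(x, c k + 1) \<notin> set es"
      proof
        assume "(x, c k + 1) \<in> set es"
        then obtain s where s: "s \<le> k" "c s = c k + 1" using memes by blast
        then have "c s \<le> c k" using mono[of s k] by (cases "s = k") auto
        then show False using s by simp
      qed
      ultimately show "(x, c k + 1) \<in> U" by (simp add: U_def)
    qed
  qed
  have top: "rho m q U 0 (c k) = int (c k)"
    using rho_top[of m q U "c k"] corner by (simp add: q_def r_def c_def)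
  have "int k + 1 \<le> rho m q U (r 0) 0"
    using claim[of k] fin top by simp
  then show ?thesis by (simp add: U_def q_def r_def)
qed



context pdm
begin

lemma cb_range: "x \<in> cb u w \<Longrightarrow> u \<in> {1..m} \<and> w \<in> {1..m} \<and> u \<noteq> w"
proof -
  assume x: "x \<in> cb u w"
  then have xD: "x \<in> D" and h: "(Tb x = u \<and> Rb x = w) \<or> (Tb x = w \<and> Rb x = u)" by (auto simp: cb_def)
  show ?thesis using TR_facts[OF xD] h by auto
qed

lemma crossing_boxes_eq:
  assumes "1 \<le> c" "c \<le> m" "1 \<le> c'" "c' \<le> m"
  shows "crossing_boxes m D c c' = cb c c'"
proof -
  have v: "(a, b) \<in> D \<Longrightarrow> vst m (a, b, True) \<and> vst m (a, b, False)" for a b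
    using D_sum[of a b] by (simp add: vst_def)
  show ?thesis
    unfolding crossing_boxes_def cb_def Tb_def Rb_def
    using visits_iff[OF assms(1,2)] visits_iff[OF assms(3,4)] v by fastforce
qed

lemma reduced_iff: "reduced_pd m D \<longleftrightarrow> (\<forall>u w. card (cb u w) \<le> 1)"
proof
  assume r: "reduced_pd m D"
  show "\<forall>u w. card (cb u w) \<le> 1"
  proof (intro allI)
    fix u w
    show "card (cb u w) \<le> 1"
    proof (cases "u \<in> {1..m} \<and> w \<in> {1..m} \<and> u \<noteq> w")
      case False
      then have "cb u w = {}" using cb_range by blast
      then show ?thesis by simp
    next
      case True
      show ?thesis
      proof (cases "u < w")
        case lt: True
        have rg: "1 \<le> u" "u < w" "w \<le> m" using True lt by auto
        have "card (crossing_boxes m D u w) \<le> 1" using r rg unfolding reduced_pd_def by blast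
        then show ?thesis using crossing_boxes_eq[of u w] rg by simp
      next
        case False
        then have rg: "1 \<le> w" "w < u" "u \<le> m" using True by auto
        have "card (crossing_boxes m D w u) \<le> 1" using r rg unfolding reduced_pd_def by blast
        then show ?thesis using crossing_boxes_eq[of w u] rg cb_sym[of u w] by simp
      qed
    qed
  qed
next
  assume c: "\<forall>u w. card (cb u w) \<le> 1"
  show "reduced_pd m D" unfolding reduced_pd_def using Dst c crossing_boxes_eq by simp
qed

lemma exit_row_eq:
  assumes a: "1 \<le> a" "a \<le> m" and c: "1 \<le> c" "c \<le> m" and l: "L a 0 False = c"
  shows "exit_row m D c = a"
proof -
  have va: "vst m (a, 0, False)" using a by (simp add: vst_def)
  have P: "pipe_visits m D c (a, 0, False)" using visits_iff[OF c va] l by simp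
  have U: "a' = a" if "pipe_visits m D c (a', 0, False)" for a'
  proof -
    have h: "L a' 0 False = c \<and> vst m (a', 0, False)" using visits_lab[OF c that] .
    then have "a' \<in> {1..m}" by (simp add: vst_def)
    moreover have "a \<in> {1..m}" using a by simp
    ultimately show "a' = a" using exit_bij h l unfolding bij_betw_def inj_on_def by metis
  qed
  show ?thesis unfolding exit_row_def using P U by (rule the_equality)
qed

lemma pd_perm_eq: "pd_perm m D = map (\<lambda>a. L a 0 False) [1..<m + 1]"
proof -
  have "(THE c. 1 \<le> c \<and> c \<le> m \<and> exit_row m D c = a) = L a 0 False" if a: "a \<in> set [1..<m + 1]" for a
  proof (rule the_equality)
    have a': "1 \<le> a" "a \<le> m" using a by auto
    have r: "L a 0 False \<in> {1..m}" using exit_bij a' unfolding bij_betw_def by auto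
    then show "1 \<le> L a 0 False \<and> L a 0 False \<le> m \<and> exit_row m D (L a 0 False) = a"
      using exit_row_eq[OF a'] by auto
  next
    fix c assume c: "1 \<le> c \<and> c \<le> m \<and> exit_row m D c = a"
    have "c \<in> (\<lambda>p. L p 0 False) ` {1..m}" using c bij_betw_imp_surj_on[OF exit_bij] by simp
    then obtain a' where a': "a' \<in> {1..m}" "L a' 0 False = c" by blast
    then have "exit_row m D c = a'" using exit_row_eq[of a' c] c by auto
    then show "c = L a 0 False" using c a' by simp
  qed
  then show ?thesis unfolding pd_perm_def by simp
qed

definition invs :: "(nat \<times> nat) set" where
  "invs = {(L p' 0 False, L p 0 False) | p p'. 1 \<le> p \<and> p < p' \<and> p' \<le> m \<and> L p' 0 False < L p 0 False}"

lemma card_D_invs: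
  assumes red: "\<forall>u w. card (cb u w) \<le> 1"
  shows "card D = card invs"
proof -
  have unc: "\<forall>x\<in>D. Tb x < Rb x" using uncrossed[OF red] by blast
  define f where "f x = (Tb x, Rb x)" for x
  have inj: "inj_on f D"
  proof (rule inj_onI)
    fix x y assume xy: "x \<in> D" "y \<in> D" "f x = f y"
    then have "x \<in> cb (Tb x) (Rb x)" "y \<in> cb (Tb x) (Rb x)" by (auto simp: cb_def f_def)
    then have "{x, y} \<subseteq> cb (Tb x) (Rb x)" by auto
    then have "card {x, y} \<le> 1" using red card_mono[OF finite_cb] le_trans by metis
    then show "x = y" by (cases "x = y") auto
  qed
  have pos: "u \<in> {1..m} \<Longrightarrow> \<exists>p\<in>{1..m}. L p 0 False = u" for u
  proof -
    assume "u \<in> {1..m}"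
    then have "u \<in> (\<lambda>p. L p 0 False) ` {1..m}" using bij_betw_imp_surj_on[OF exit_bij] by simp
    then show ?thesis by blast
  qed
  have img: "f ` D = invs"
  proof
    show "f ` D \<subseteq> invs"
    proof
      fix z assume "z \<in> f ` D"
      then obtain x where x: "x \<in> D" "z = (Tb x, Rb x)" by (auto simp: f_def)
      define u where "u = Tb x"
      define w where "w = Rb x"
      have uw: "u < w" "u \<in> {1..m}" "w \<in> {1..m}" using unc x TR_facts[OF x(1)] by (auto simp: u_def w_def)
      have xc: "x \<in> cb u w" using x by (simp add: cb_def u_def w_def)
      have c1: "card (cb u w) = 1"
      proof -
        have "card (cb u w) \<noteq> 0" using xc finite_cb by auto
        then show ?thesis using red by (metis le_antisym less_one not_le)
      qed
      obtain pu where pu: "pu \<in> {1..m}" "L pu 0 False = u" using pos uw by blast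
      obtain pw where pw: "pw \<in> {1..m}" "L pw 0 False = w" using pos uw by blast
      have "pu \<noteq> pw" using pu pw uw by auto
      have "\<not> pu < pw"
      proof
        assume "pu < pw"
        then have "L pw 0 False < L pu 0 False \<longleftrightarrow> odd (card (cb u w))"
          using final_parity[of pu pw] pu pw by auto
        then show False using c1 uw pu pw by simp
      qed
      then have "pw < pu" using \<open>pu \<noteq> pw\<close> by simp
      then show "z \<in> invs" unfolding invs_def using pu pw uw x(2) u_def w_def
        by (intro CollectI exI[of _ pw] exI[of _ pu]) auto
    qed
  next
    show "invs \<subseteq> f ` D"
    proof
      fix z assume "z \<in> invs"
      then obtain p p' where pp: "1 \<le> p" "p < p'" "p' \<le> m" "L p' 0 False < L p 0 False"
        "z = (L p' 0 False, L p 0 False)" unfolding invs_def by blast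
      have "odd (card (cb (L p 0 False) (L p' 0 False)))" using final_parity[OF pp(1-3)] pp(4) by simp
      then have "cb (L p 0 False) (L p' 0 False) \<noteq> {}" by (metis card.empty even_zero)
      then obtain x where x: "x \<in> cb (L p 0 False) (L p' 0 False)" by blast
      then have xD: "x \<in> D" by (simp add: cb_def)
      have "Tb x < Rb x" using unc xD by blast
      then have "Tb x = L p' 0 False \<and> Rb x = L p 0 False" using x pp(4) by (auto simp: cb_def)
      then have "f x = z" using pp(5) by (simp add: f_def)
      then show "z \<in> f ` D" using xD by blast
    qed
  qed
  show ?thesis using card_image[OF inj] img by simp
qed

lemma small_fixed:
  assumes hyp: "\<forall>x\<in>D. k < Tb x" and km: "k \<le> m"
  shows "1 \<le> a \<Longrightarrow> a + b \<le> m \<Longrightarrow> \<forall>p. 1 \<le> p \<and> p \<le> k \<longrightarrow> S a b p = p"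
proof (induction a b rule: cut_induct)
  case init
  then show ?case using S_init km by simp
next
  case (step a b)
  show ?case
  proof (cases "(a, b) \<in> D")
    case False
    then show ?thesis using S_step[OF step.hyps(1-3)] step.IH by simp
  next
    case True
    have T: "Tb (a, b) = S a b (a + b - 1)" using S_T[of b a] step.hyps by (simp add: Tb_def)
    have g: "k < a + b - 1"
    proof (rule ccontr)
      assume "\<not> k < a + b - 1"
      then have "S a b (a + b - 1) = a + b - 1" using step.IH step.hyps by auto
      then show False using T hyp True \<open>\<not> k < a + b - 1\<close> by auto
    qed
    show ?thesis
    proof (intro allI impI)
      fix p assume p: "1 \<le> p \<and> p \<le> k"
      have "sw (a + b - 1) p = p" using p g by (auto simp: sw_def)
      then show "S a (b - 1) p = p" using S_step[OF step.hyps(1-3)] True step.IH p by simp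
    qed
  qed
next
  case (row a)
  then show ?case using S_row[OF row.hyps] km by (metis le_trans)
qed

lemma D_reg_of_big:
  assumes hyp: "\<forall>x\<in>D. k < Tb x" and km: "k \<le> m"
  shows "D \<subseteq> reg m k"
proof
  fix x assume x: "x \<in> D"
  obtain a b where xe: "x = (a, b)" by fastforce
  have h: "1 \<le> a" "1 \<le> b" "a + b \<le> m" using D_sum x xe by auto
  have T: "Tb x = S a b (a + b - 1)" using S_T[of b a] h xe by (simp add: Tb_def)
  have "k < a + b - 1"
  proof (rule ccontr)
    assume "\<not> k < a + b - 1"
    then have "S a b (a + b - 1) = a + b - 1" using small_fixed[OF hyp km h(1) h(3)] h by auto
    then show False using T hyp x \<open>\<not> k < a + b - 1\<close> by auto
  qed
  then show "x \<in> reg m k" using h xe by (auto simp: reg_def)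
qed

lemma small_fixed_reg:
  assumes sub: "D \<subseteq> reg m k" and km: "k \<le> m"
  shows "1 \<le> a \<Longrightarrow> a + b \<le> m \<Longrightarrow> \<forall>p. 1 \<le> p \<and> p \<le> k \<longrightarrow> S a b p = p"
proof (induction a b rule: cut_induct)
  case init
  then show ?case using S_init km by simp
next
  case (step a b)
  show ?case
  proof (cases "(a, b) \<in> D")
    case False
    then show ?thesis using S_step[OF step.hyps(1-3)] step.IH by simp
  next
    case True
    have g: "k < a + b - 1" using sub True by (auto simp: reg_def)
    show ?thesis
    proof (intro allI impI)
      fix p assume p: "1 \<le> p \<and> p \<le> k"
      have "sw (a + b - 1) p = p" using p g by (auto simp: sw_def)
      then show "S a (b - 1) p = p" using S_step[OF step.hyps(1-3)] True step.IH p by simp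
    qed
  qed
next
  case (row a)
  then show ?case using S_row[OF row.hyps] km by (metis le_trans)
qed

lemma exits_small:
  assumes sub: "D \<subseteq> reg m k" and km: "k \<le> m" and p: "1 \<le> p" "p \<le> k"
  shows "L p 0 False = p"
  using small_fixed_reg[OF sub km, of m 0] m1 S_final[of p] p km by simp

end


definition pif :: "nat \<Rightarrow> nat \<Rightarrow> nat \<Rightarrow> nat" where
  "pif n k p = (if p \<le> k then p else n + 1 - p)"

definition dia :: "nat \<Rightarrow> nat \<times> nat \<Rightarrow> nat \<times> nat" where
  "dia n x = (snd x, n + 1 - fst x)"

lemma pi_nk_eq:
  assumes "k \<le> n - k"
  shows "pi_nk n k = map (pif n k) [1..<n - k + 1]"
proof (rule nth_equalityI)
  have lenpi: "length (pi_nk n k) = n - k" using assms by (simp add: pi_nk_def; arith)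
  then show "length (pi_nk n k) = length (map (pif n k) [1..<n - k + 1])" by (simp; arith)
next
  fix i assume i: "i < length (pi_nk n k)"
  have lenpi: "length (pi_nk n k) = n - k" using assms by (simp add: pi_nk_def; arith)
  then have i': "i < n - k" using i by simp
  show "pi_nk n k ! i = map (pif n k) [1..<n - k + 1] ! i"
  proof (cases "i < k")
    case True
    have "pi_nk n k ! i = [1..<k + 1] ! i" using True by (simp add: pi_nk_def nth_append del: upt_Suc)
    also have "\<dots> = 1 + i" using True by (simp del: upt_Suc)
    finally show ?thesis using True i' by (simp add: pif_def del: upt_Suc)
  next
    case False
    have "pi_nk n k ! i = rev [k + 1..<n - k + 1] ! (i - k)"
      using False by (simp add: pi_nk_def nth_append del: upt_Suc)
    also have "\<dots> = [k + 1..<n - k + 1] ! (n - k - k - 1 - (i - k))"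
      using False i' by (simp add: rev_nth del: upt_Suc)
    also have "\<dots> = k + 1 + (n - k - k - 1 - (i - k))" using False i' by (simp del: upt_Suc)
    also have "\<dots> = n - i" using False i' assms by simp
    finally show ?thesis using False i' by (simp add: pif_def del: upt_Suc)
  qed
qed

lemma Gamma_box:
  assumes "x \<in> Gamma n k" "k \<le> n"
  shows "box_of n x \<in> reg (n - k) k \<and> dia n (box_of n x) = x"
  using assms by (cases x) (auto simp: Gamma_def box_of_def reg_def dia_def)

lemma reg_dia:
  assumes "y \<in> reg (n - k) k" "k \<le> n"
  shows "dia n y \<in> Gamma n k \<and> box_of n (dia n y) = y"
  using assms by (cases y) (auto simp: Gamma_def box_of_def reg_def dia_def)

lemma sorted_NE_nth: "sorted_wrt NE xs \<Longrightarrow> i < j \<Longrightarrow> j < length xs \<Longrightarrow> NE (xs ! i) (xs ! j)"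
  by (simp add: sorted_wrt_iff_nth_less)

lemma sorted_NE_bounds:
  assumes s: "sorted_wrt NE xs" and y: "y \<in> set xs"
  shows "fst y \<le> fst (hd xs) \<and> snd y \<le> snd (last xs)"
proof -
  obtain i where i: "i < length xs" "xs ! i = y" using y by (auto simp: in_set_conv_nth)
  have ne: "xs \<noteq> []" using y by auto
  have "fst (xs ! i) \<le> fst (xs ! 0)"
  proof (cases "i = 0")
    case False
    then show ?thesis using sorted_NE_nth[OF s, of 0 i] i by (auto simp: NE_def)
  qed simp
  moreover have "snd (xs ! i) \<le> snd (xs ! (length xs - 1))"
  proof (cases "i = length xs - 1")
    case False
    then have "i < length xs - 1" using i by simp
    moreover have "length xs - 1 < length xs" using i by simp
    ultimately show ?thesis using sorted_NE_nth[OF s, of i "length xs - 1"] by (auto simp: NE_def)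
  qed simp
  ultimately show ?thesis using i ne by (simp add: hd_conv_nth last_conv_nth)
qed

lemma chain_crossing:
  assumes len: "length xs = k + 1" and s: "sorted_wrt NE xs" and sub: "set xs \<subseteq> reg (n - k) k"
    and kn: "k \<le> n" and corner: "fst (hd xs) + snd (last xs) \<le> n"
  shows "contains_crossing (k + 1) (dia n ` set xs)"
proof -
  have dist: "distinct xs"
  proof (rule distinct_conv_nth[THEN iffD2], intro allI impI)
    fix i j assume "i < length xs" "j < length xs" "i \<noteq> j"
    then show "xs ! i \<noteq> xs ! j" using sorted_NE_nth[OF s, of i j] sorted_NE_nth[OF s, of j i]
      by (cases "i < j") (auto simp: NE_def)
  qed
  have injd: "inj_on (dia n) (set xs)"
  proof (rule inj_onI)
    fix x y assume "x \<in> set xs" "y \<in> set xs" "dia n x = dia n y"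
    then show "x = y" using reg_dia[of x n k] reg_dia[of y n k] sub kn by (metis subsetD)
  qed
  have card: "card (dia n ` set xs) = k + 1"
    using card_image[OF injd] distinct_card[OF dist] len by simp
  have cr: "\<forall>e\<in>dia n ` set xs. \<forall>f\<in>dia n ` set xs. e \<noteq> f \<longrightarrow> crosses e f"
  proof (intro ballI impI)
    fix e f assume e: "e \<in> dia n ` set xs" and f: "f \<in> dia n ` set xs" and ef: "e \<noteq> f"
    obtain i where i: "i < length xs" "e = dia n (xs ! i)" using e by (auto simp: in_set_conv_nth)
    obtain j where j: "j < length xs" "f = dia n (xs ! j)" using f by (auto simp: in_set_conv_nth)
    have ij: "i \<noteq> j" using i j ef by auto
    have key: "crosses (dia n (xs ! i')) (dia n (xs ! j'))" if ij': "i' < j'" "j' < length xs" for i' j'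
    proof -
      have ne: "NE (xs ! i') (xs ! j')" using sorted_NE_nth[OF s ij'] .
      have b1: "fst (xs ! i') \<le> fst (hd xs)" using sorted_NE_bounds[OF s, of "xs ! i'"] ij' by simp
      have b2: "snd (xs ! j') \<le> snd (last xs)" using sorted_NE_bounds[OF s, of "xs ! j'"] ij' by simp
      have r1: "xs ! i' \<in> reg (n - k) k" "xs ! j' \<in> reg (n - k) k" using sub ij' by auto
      then have "fst (xs ! i') \<le> n" "fst (xs ! j') \<le> n" by (auto simp: reg_def split: prod.splits)
      then show ?thesis using ne b1 b2 corner unfolding crosses_def dia_def NE_def by auto
    qed
    have cs: "crosses e' f' \<Longrightarrow> crosses f' e'" for e' f' by (auto simp: crosses_def split: prod.splits)
    show "crosses e f"
    proof (cases "i < j")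
      case True then show ?thesis using key[of i j] i j by simp
    next
      case False then have "j < i" using ij by simp
      then show ?thesis using key[of j i] i j cs by simp
    qed
  qed
  show ?thesis unfolding contains_crossing_def is_crossing_def using card cr by blast
qed



lemma Dm_cons:
  assumes U: "U \<subseteq> staircase m" and m: "1 \<le> m"
  shows "\<forall>x\<in>Dm m U. x \<in> U \<and> pdm.Tb m (Dm m U) x < pdm.Rb m (Dm m U) x"
    and "\<forall>x\<in>U. x \<notin> Dm m U \<longrightarrow> pdm.Rb m (Dm m U) x < pdm.Tb m (Dm m U) x"
proof -
  interpret P: pdm m "Dm m U" using Dm_pdm[OF U m] .
  have lab: "lab m (Dm m U) a' b' ft = dl m U a' b' ft" for a' b' ft using lab_Dm by blast
  show "\<forall>x\<in>Dm m U. x \<in> U \<and> P.Tb x < P.Rb x"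
  proof
    fix x assume x: "x \<in> Dm m U"
    have "P.Tb x < P.Rb x" unfolding P.Tb_def P.Rb_def lab using x by (simp add: Dm_def)
    then show "x \<in> U \<and> P.Tb x < P.Rb x" using x by (simp add: Dm_def)
  qed
  show "\<forall>x\<in>U. x \<notin> Dm m U \<longrightarrow> P.Rb x < P.Tb x"
  proof (intro ballI impI)
    fix x assume x: "x \<in> U" "x \<notin> Dm m U"
    then have "\<not> P.Tb x < P.Rb x" unfolding P.Tb_def P.Rb_def lab by (simp add: Dm_def)
    moreover have "P.Tb x \<noteq> P.Rb x" using P.TR_distinct x U by blast
    ultimately show "P.Rb x < P.Tb x" by simp
  qed
qed

lemma cc_mono: "contains_crossing r A \<Longrightarrow> A \<subseteq> B \<Longrightarrow> contains_crossing r B"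
  unfolding contains_crossing_def by blast

context pdm
begin

lemma perm_char:
  assumes "m = n - k" "k \<le> m"
  shows "pd_perm m D = pi_nk n k \<longleftrightarrow> (\<forall>p\<in>{1..m}. L p 0 False = pif n k p)"
proof -
  have "pi_nk n k = map (pif n k) [1..<m + 1]" using pi_nk_eq[of k n] assms by simp
  then show ?thesis using pd_perm_eq by (auto simp: map_eq_conv)
qed

lemma box_inv:
  assumes red: "\<forall>u w. card (cb u w) \<le> 1" and x: "x \<in> D"
  shows "\<exists>p p'. 1 \<le> p \<and> p < p' \<and> p' \<le> m \<and> L p' 0 False = Tb x \<and> L p 0 False = Rb x"
proof -
  have "(Tb x, Rb x) \<in> invs"
  proof -
    have unc: "Tb x < Rb x" using uncrossed[OF red x] .
    define u where "u = Tb x"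
    define w where "w = Rb x"
    have uw: "u < w" "u \<in> {1..m}" "w \<in> {1..m}" using unc TR_facts[OF x] by (auto simp: u_def w_def)
    have xc: "x \<in> cb u w" using x by (simp add: cb_def u_def w_def)
    have c1: "card (cb u w) = 1"
    proof -
      have "card (cb u w) \<noteq> 0" using xc finite_cb by auto
      then show ?thesis using red by (metis le_antisym less_one not_le)
    qed
    have pos: "v \<in> {1..m} \<Longrightarrow> \<exists>p\<in>{1..m}. L p 0 False = v" for v
    proof -
      assume "v \<in> {1..m}"
      then have "v \<in> (\<lambda>p. L p 0 False) ` {1..m}" using bij_betw_imp_surj_on[OF exit_bij] by simp
      then show ?thesis by blast
    qed
    obtain pu where pu: "pu \<in> {1..m}" "L pu 0 False = u" using pos uw by blast
    obtain pw where pw: "pw \<in> {1..m}" "L pw 0 False = w" using pos uw by blast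
    have "pu \<noteq> pw" using pu pw uw by auto
    have "\<not> pu < pw"
    proof
      assume "pu < pw"
      then have "L pw 0 False < L pu 0 False \<longleftrightarrow> odd (card (cb u w))"
        using final_parity[of pu pw] pu pw by auto
      then show False using c1 uw pu pw by simp
    qed
    then have "pw < pu" using \<open>pu \<noteq> pw\<close> by simp
    then show ?thesis unfolding invs_def using pu pw uw u_def w_def
      by (intro CollectI exI[of _ pw] exI[of _ pu]) auto
  qed
  then obtain p p' where "1 \<le> p" "p < p'" "p' \<le> m" "(Tb x, Rb x) = (L p' 0 False, L p 0 False)"
    unfolding invs_def by blast
  then show ?thesis by auto
qed

end

context
  fixes n k :: nat
  assumes k1: "1 \<le> k" and kn: "2 * k + 1 \<le> n"
begin

lemma mm_facts: "k + 1 \<le> (n - k)" "1 \<le> (n - k)" "n = (n - k) + k" "k \<le> (n - k)" using k1 kn by auto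

lemma reduced_facts:
  assumes r: "reduced_pd_for (n - k) (pi_nk n k) D"
  shows "pdm (n - k) D" and "\<forall>u w. card (pdm.cb (n - k) D u w) \<le> 1" and "\<forall>x\<in>D. pdm.Tb (n - k) D x < pdm.Rb (n - k) D x"
    and "\<forall>p\<in>{1..(n - k)}. lab (n - k) D p 0 False = pif n k p" and "D \<subseteq> reg (n - k) k"
proof -
  show P: "pdm (n - k) D" using r mm_facts unfolding reduced_pd_for_def reduced_pd_def by unfold_locales auto
  interpret P: pdm "n - k" D using P .
  show red: "\<forall>u w. card (P.cb u w) \<le> 1" using r P.reduced_iff unfolding reduced_pd_for_def by blast
  show "\<forall>x\<in>D. P.Tb x < P.Rb x" using P.uncrossed[OF red] by blast
  show ex: "\<forall>p\<in>{1..(n - k)}. P.L p 0 False = pif n k p"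
    using r P.perm_char[of n k] mm_facts unfolding reduced_pd_for_def by blast
  have big: "\<forall>x\<in>D. k < P.Tb x"
  proof
    fix x assume x: "x \<in> D"
    obtain p p' where pp: "1 \<le> p" "p < p'" "p' \<le> (n - k)" "P.L p' 0 False = P.Tb x" "P.L p 0 False = P.Rb x"
      using P.box_inv[OF red x] by blast
    have lt: "P.Tb x < P.Rb x" using P.uncrossed[OF red x] .
    have e1: "P.L p 0 False = pif n k p" "P.L p' 0 False = pif n k p'" using ex pp by auto
    have "k < p"
    proof (rule ccontr)
      assume "\<not> k < p"
      then have "pif n k p = p" by (simp add: pif_def)
      moreover have "p < pif n k p'" using pp mm_facts `\<not> k < p` by (auto simp: pif_def)
      ultimately show False using e1 pp lt by simp
    qed
    then have "k < p'" using pp by simp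
    then have "pif n k p' = n + 1 - p'" by (simp add: pif_def)
    moreover have "k < n + 1 - p'" using pp mm_facts by arith
    ultimately show "k < P.Tb x" using e1 pp by simp
  qed
  show "D \<subseteq> reg (n - k) k" using P.D_reg_of_big[OF big] mm_facts by simp
qed

lemma cnt_pif_le: "r \<le> (n - k) \<Longrightarrow> cnt (pif n k ` {1..r}) ((n - k) + k - r) \<le> k"
proof -
  assume r: "r \<le> (n - k)"
  have "{x \<in> pif n k ` {1..r}. x \<le> (n - k) + k - r} \<subseteq> {1..k}"
  proof
    fix x assume "x \<in> {x \<in> pif n k ` {1..r}. x \<le> (n - k) + k - r}"
    then obtain p where p: "p \<in> {1..r}" "x = pif n k p" "x \<le> (n - k) + k - r" by blast
    show "x \<in> {1..k}"
    proof (cases "p \<le> k")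
      case True then show ?thesis using p by (simp add: pif_def)
    next
      case False
      then have "x = n + 1 - p" using p by (simp add: pif_def)
      then show ?thesis using p r mm_facts by auto
    qed
  qed
  then show ?thesis unfolding cnt_def by (metis card_atLeastAtMost card_mono diff_Suc_1 finite_atLeastAtMost)
qed

lemma B1:
  assumes r: "reduced_pd_for (n - k) (pi_nk n k) D"
  shows "\<not> contains_crossing (k + 1) (Gamma n k - dia n ` D)"
proof
  assume "contains_crossing (k + 1) (Gamma n k - dia n ` D)"
  then obtain C where C: "C \<subseteq> Gamma n k - dia n ` D" "card C = k + 1"
    "\<forall>e\<in>C. \<forall>f\<in>C. e \<noteq> f \<longrightarrow> crosses e f"
    unfolding contains_crossing_def is_crossing_def by blast
  interpret P: pdm "n - k" D using reduced_facts[OF r] by blast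
  note rf = reduced_facts[OF r]
  have finC: "finite C" using C(2) card.infinite by fastforce
  define ys where "ys = sorted_list_of_set C"
  have ys: "sorted_wrt (<) ys" "set ys = C" "length ys = card C"
    using finC by (simp_all add: ys_def)
  have ys': "sorted_wrt (<) ys" using ys(1) by simp
  have lenys: "length ys = k + 1" using ys C by simp
  have Gy: "\<And>i. i < length ys \<Longrightarrow> ys ! i \<in> Gamma n k" using C ys by auto
  have cr: "fst (ys ! i) < fst (ys ! j) \<and> fst (ys ! j) < snd (ys ! i) \<and> snd (ys ! i) < snd (ys ! j)"
    if ij: "i < j" "j < length ys" for i j
  proof -
    have lt: "ys ! i < ys ! j" using ys' ij by (simp add: sorted_wrt_iff_nth_less)
    have "ys ! i \<noteq> ys ! j" using lt by simp
    moreover have "ys ! i \<in> C" "ys ! j \<in> C" using ys(2) ij by auto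
    ultimately have "crosses (ys ! i) (ys ! j)" using C(3) by blast
    then show ?thesis using lt by (cases "ys ! i", cases "ys ! j") (auto simp: crosses_def)
  qed
  define es where "es = map (box_of n) ys"
  have lenes: "length es = k + 1" using lenys by (simp add: es_def)
  have esn: "i < length ys \<Longrightarrow> es ! i = (n + 1 - snd (ys ! i), fst (ys ! i))" for i
    by (simp add: es_def box_of_def split: prod.splits)
  have jn: "i < length ys \<Longrightarrow> snd (ys ! i) \<le> n" for i
  proof -
    assume "i < length ys"
    then have "ys ! i \<in> Gamma n k" using Gy by blast
    then show ?thesis by (cases "ys ! i") (simp add: Gamma_def)
  qed
  have srt: "sorted_wrt NE es"
    unfolding sorted_wrt_iff_nth_less
  proof (intro allI impI)
    fix i j assume ij: "i < j" "j < length es"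
    then have ij': "i < j" "j < length ys" using lenes lenys by auto
    show "NE (es ! i) (es ! j)" using cr[OF ij'] esn[of i] esn[of j] jn[of i] jn[of j] ij'
      by (auto simp: NE_def)
  qed
  have sub: "set es \<subseteq> reg (n - k) k"
    using Gamma_box[of _ n k] C(1) ys(2) mm_facts unfolding es_def by auto
  have corner: "fst (es ! 0) + snd (es ! k) \<le> (n - k) + k"
  proof -
    have "fst (ys ! k) < snd (ys ! 0)" using cr[of 0 k] lenys k1 by simp
    then show ?thesis using esn[of 0] esn[of k] lenys jn[of 0] mm_facts by simp
  qed
  have lb: "int k + 1 \<le> rho (n - k) ((n - k) + k - fst (es ! 0)) (reg (n - k) k - set es) (fst (es ! 0)) 0"
    using lower_bound[OF _ lenes srt sub corner] mm_facts by simp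
  define r0 where "r0 = fst (es ! 0)"
  define q where "q = (n - k) + k - r0"
  have r0r: "1 \<le> r0" "r0 \<le> (n - k)"
  proof -
    have "es ! 0 \<in> reg (n - k) k" using sub lenes by auto
    then show "1 \<le> r0" "r0 \<le> (n - k)" by (auto simp: reg_def r0_def split: prod.splits)
  qed
  have Dsub: "D \<subseteq> reg (n - k) k - set es"
  proof
    fix d assume d: "d \<in> D"
    have "d \<notin> set es"
    proof
      assume "d \<in> set es"
      then obtain c where c: "c \<in> C" "d = box_of n c" using ys(2) by (auto simp: es_def)
      have "dia n d = c" using Gamma_box[of c n k] C(1) c mm_facts by auto
      then have "c \<in> dia n ` D" using d by blast
      then show False using C(1) c by blast
    qed
    then show "d \<in> reg (n - k) k - set es" using rf(5) d by auto
  qed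
  have Us: "reg (n - k) k - set es \<subseteq> staircase (n - k)" using reg_stair by blast
  have mono: "rho (n - k) q (reg (n - k) k - set es) r0 0 \<le> rho (n - k) q D r0 0"
    using rho_mono[OF Us Dsub] mm_facts r0r by simp
  have c1: "\<forall>x\<in>D. x \<in> D \<and> P.Tb x < P.Rb x" using rf(3) by blast
  have c2: "\<forall>x\<in>D. x \<notin> D \<longrightarrow> P.Rb x < P.Tb x" by blast
  have "rho (n - k) q D r0 0 = int (P.Rk r0 0 q)" using P.Rk_rho[OF P.Dst c1 c2] r0r by simp
  also have "P.Rk r0 0 q = cnt ((\<lambda>r. P.L r 0 False) ` {1..r0}) q" using P.Rk_left r0r by simp
  also have "(\<lambda>r. P.L r 0 False) ` {1..r0} = pif n k ` {1..r0}" using rf(4) r0r by auto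
  finally have "rho (n - k) q D r0 0 \<le> int k" using cnt_pif_le[OF r0r(2)] by (simp add: q_def)
  then show False using lb mono by (simp add: r0_def q_def)
qed

end


context
  fixes n k :: nat
  assumes k1: "1 \<le> k" and kn: "2 * k + 1 \<le> n"
begin

lemma mf: "k + 1 \<le> n - k" "1 \<le> n - k" "n = (n - k) + k" "k \<le> n - k" using k1 kn by auto

lemma A1:
  assumes E: "E \<subseteq> reg (n - k) k" and nc: "\<not> contains_crossing (k + 1) (dia n ` E)"
  shows "reduced_pd_for (n - k) (pi_nk n k) (Dm (n - k) (reg (n - k) k - E))"
    and "Dm (n - k) (reg (n - k) k - E) \<subseteq> reg (n - k) k - E"
proof -
  define m where "m = n - k"
  define U where "U = reg m k - E"
  define D where "D = Dm m U"
  have m: "1 \<le> m" "k + 1 \<le> m" "n = m + k" using mf by (auto simp: m_def)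
  have Ur: "U \<subseteq> reg m k" by (auto simp: U_def)
  have Us: "U \<subseteq> staircase m" using Ur reg_stair by blast
  interpret P: pdm m D using Dm_pdm[OF Us m(1)] by (simp add: D_def)
  note cons = Dm_cons[OF Us m(1), folded D_def]
  have DU: "D \<subseteq> U" by (auto simp: D_def Dm_def)
  show "Dm (n - k) (reg (n - k) k - E) \<subseteq> reg (n - k) k - E" using DU by (simp add: D_def U_def m_def)
  have red: "\<forall>u w. card (P.cb u w) \<le> 1" using P.consistent_cb cons(1) by blast
  have Dreg: "D \<subseteq> reg m k" using DU Ur by blast
  define f where "f = (\<lambda>p. P.L p 0 False)"
  have fbij: "bij_betw f {1..m} {1..m}" using P.exit_bij by (simp add: f_def)
  have finj: "\<And>p p'. p \<in> {1..m} \<Longrightarrow> p' \<in> {1..m} \<Longrightarrow> f p = f p' \<Longrightarrow> p = p'"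
    using fbij unfolding bij_betw_def inj_on_def by blast
  have frange: "p \<in> {1..m} \<Longrightarrow> f p \<in> {1..m}" for p using fbij unfolding bij_betw_def by blast
  have small: "1 \<le> p \<Longrightarrow> p \<le> k \<Longrightarrow> f p = p" for p
    using P.exits_small[OF Dreg] m by (simp add: f_def)
  have bound: "m + k - p < f p" if p: "k + 1 \<le> p" "p \<le> m" for p
  proof -
    define q where "q = m + k - p"
    have rq: "rho m q U p 0 = int (cnt (f ` {1..p}) q)"
      using P.Rk_rho[OF Us cons(1) cons(2), of p 0 q] P.Rk_left[of p q] p by (simp add: f_def)
    have "rho m q U p 0 \<le> int k"
    proof -
      have ui: "rho m q U p 0 \<le> max (int k) (max (int k + int 0) (int p + int 0 + int q - int m)) \<or>
        (\<exists>xs. length xs = k + 1 \<and> set xs \<subseteq> reg m k - U \<and> sorted_wrt NE xs \<and>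
         fst (hd xs) \<le> p \<and> 0 + 1 \<le> snd (hd xs) \<and> int (snd (last xs)) + rho m q U p 0 \<le> int (0 + k + 1 + q))"
        using upper_inv[OF Ur m(1), of p 0 k q] p by simp
      have mx: "max (int k) (max (int k + int 0) (int p + int 0 + int q - int m)) = int k"
        using p by (simp add: q_def)
      show ?thesis
      proof (rule ccontr)
        assume nk: "\<not> rho m q U p 0 \<le> int k"
        then obtain xs where xs: "length xs = k + 1" "set xs \<subseteq> reg m k - U" "sorted_wrt NE xs"
          "fst (hd xs) \<le> p" "int (snd (last xs)) + rho m q U p 0 \<le> int (0 + k + 1 + q)"
          using ui mx by auto
        have sE: "set xs \<subseteq> E" using xs(2) E by (auto simp: U_def m_def)
        have "snd (last xs) \<le> q" using xs(5) nk by simp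
        then have corner: "fst (hd xs) + snd (last xs) \<le> n" using xs(4) p m by (simp add: q_def)
        have sr: "set xs \<subseteq> reg (n - k) k" using xs(2) by (auto simp: m_def)
        have kn': "k \<le> n" using m by simp
        have "contains_crossing (k + 1) (dia n ` set xs)"
          using chain_crossing[OF xs(1,3) sr kn' corner] .
        then have "contains_crossing (k + 1) (dia n ` E)" using cc_mono sE by blast
        then show False using nc by simp
      qed
    qed
    then have cle: "cnt (f ` {1..p}) q \<le> k" using rq by simp
    show ?thesis
    proof (rule ccontr)
      assume "\<not> m + k - p < f p"
      then have fq: "f p \<le> q" by (simp add: q_def)
      have "insert (f p) {1..k} \<subseteq> {x \<in> f ` {1..p}. x \<le> q}"
      proof
        fix x assume "x \<in> insert (f p) {1..k}"
        then show "x \<in> {x \<in> f ` {1..p}. x \<le> q}"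
        proof
          assume "x = f p" then show ?thesis using fq p by auto
        next
          assume x: "x \<in> {1..k}"
          then have "f x = x" using small by auto
          then have "x \<in> f ` {1..p}" using x p by (metis atLeastAtMost_iff image_eqI le_trans trans_le_add1 add_le_cancel_right)
          then show ?thesis using x p by (auto simp: q_def)
        qed
      qed
      moreover have "f p \<notin> {1..k}"
      proof
        assume fp: "f p \<in> {1..k}"
        then have "f (f p) = f p" using small by auto
        then have "f p = p" using finj[of "f p" p] fp p m by auto
        then show False using fp p by auto
      qed
      ultimately have "k + 1 \<le> card {x \<in> f ` {1..p}. x \<le> q}"
      proof -
        assume s1: "insert (f p) {1..k} \<subseteq> {x \<in> f ` {1..p}. x \<le> q}" and s2: "f p \<notin> {1..k}"
        have "card (insert (f p) {1..k}) = k + 1" using s2 by simp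
        moreover have "finite {x \<in> f ` {1..p}. x \<le> q}" by simp
        ultimately show ?thesis using card_mono[OF _ s1] by simp
      qed
      then show False using cle by (simp add: cnt_def)
    qed
  qed
  have big: "\<forall>p. k + 1 \<le> p \<and> p \<le> m \<longrightarrow> f p = m + k + 1 - p"
  proof (intro allI)
    fix p show "k + 1 \<le> p \<and> p \<le> m \<longrightarrow> f p = m + k + 1 - p"
    proof (induction p rule: less_induct)
      case (less p)
      show ?case
      proof
        assume p: "k + 1 \<le> p \<and> p \<le> m"
        have lo: "m + k + 1 - p \<le> f p" using bound[of p] p by simp
        have hi: "f p \<le> m" using frange[of p] p by simp
        show "f p = m + k + 1 - p"
        proof (rule ccontr)
          assume ne: "f p \<noteq> m + k + 1 - p"
          define p' where "p' = m + k + 1 - f p"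
          have p': "p' < p" "k + 1 \<le> p'" using lo hi ne p by (auto simp: p'_def)
          have "f p' = m + k + 1 - p'" using less.IH[OF p'(1)] p' p by simp
          also have "\<dots> = f p" using lo hi p by (simp add: p'_def)
          finally have "p' = p" using finj[of p' p] p' p by simp
          then show False using p' by simp
        qed
      qed
    qed
  qed
  have ex: "\<forall>p\<in>{1..m}. P.L p 0 False = pif n k p"
  proof
    fix p assume p: "p \<in> {1..m}"
    show "P.L p 0 False = pif n k p"
    proof (cases "p \<le> k")
      case True then show ?thesis using small[of p] p by (simp add: f_def pif_def)
    next
      case False then show ?thesis using big p m by (simp add: f_def pif_def)
    qed
  qed
  have mk: "m = n - k" "k \<le> m" using mf(4) by (simp_all add: m_def)
  have "pd_perm m D = pi_nk n k" using P.perm_char[OF mk] ex by blast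
  moreover have "reduced_pd m D" using P.reduced_iff red by simp
  ultimately show "reduced_pd_for (n - k) (pi_nk n k) (Dm (n - k) (reg (n - k) k - E))"
    by (simp add: reduced_pd_for_def D_def U_def m_def)
qed

end


context
  fixes n k :: nat
  assumes k1: "1 \<le> k" and kn: "2 * k + 1 \<le> n"
begin

lemma mf2: "k + 1 \<le> n - k" "1 \<le> n - k" "k \<le> n" using k1 kn by auto

lemma card_red:
  assumes r: "reduced_pd_for (n - k) (pi_nk n k) D"
  shows "card D = card {(pif n k p', pif n k p) | p p'. 1 \<le> p \<and> p < p' \<and> p' \<le> n - k \<and> pif n k p' < pif n k p}"
proof -
  note rf = reduced_facts[OF k1 kn r]
  interpret P: pdm "n - k" D using rf(1) .
  have "P.invs = {(pif n k p', pif n k p) | p p'. 1 \<le> p \<and> p < p' \<and> p' \<le> n - k \<and> pif n k p' < pif n k p}"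
    unfolding P.invs_def
  proof (intro Collect_cong iffI)
    fix z
    assume "\<exists>p p'. z = (P.L p' 0 False, P.L p 0 False) \<and> 1 \<le> p \<and> p < p' \<and> p' \<le> n - k \<and> P.L p' 0 False < P.L p 0 False"
    then obtain p p' where h: "z = (P.L p' 0 False, P.L p 0 False)" "1 \<le> p" "p < p'" "p' \<le> n - k"
      "P.L p' 0 False < P.L p 0 False" by blast
    have "P.L p 0 False = pif n k p" "P.L p' 0 False = pif n k p'" using rf(4) h by auto
    then show "\<exists>p p'. z = (pif n k p', pif n k p) \<and> 1 \<le> p \<and> p < p' \<and> p' \<le> n - k \<and> pif n k p' < pif n k p"
      using h by metis
  next
    fix z
    assume "\<exists>p p'. z = (pif n k p', pif n k p) \<and> 1 \<le> p \<and> p < p' \<and> p' \<le> n - k \<and> pif n k p' < pif n k p"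
    then obtain p p' where h: "z = (pif n k p', pif n k p)" "1 \<le> p" "p < p'" "p' \<le> n - k"
      "pif n k p' < pif n k p" by blast
    have "P.L p 0 False = pif n k p" "P.L p' 0 False = pif n k p'" using rf(4) h by auto
    then show "\<exists>p p'. z = (P.L p' 0 False, P.L p 0 False) \<and> 1 \<le> p \<and> p < p' \<and> p' \<le> n - k \<and> P.L p' 0 False < P.L p 0 False"
      using h by metis
  qed
  then show ?thesis using P.card_D_invs[OF rf(2)] by simp
qed

lemma red_unique:
  assumes r1: "reduced_pd_for (n - k) (pi_nk n k) D1" and r2: "reduced_pd_for (n - k) (pi_nk n k) D2"
    and sub: "D1 \<subseteq> D2"
  shows "D1 = D2"
proof -
  interpret P: pdm "n - k" D2 using reduced_facts(1)[OF k1 kn r2] .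
  show ?thesis using card_subset_eq[OF P.finite_D sub] card_red[OF r1] card_red[OF r2] by simp
qed

lemma dia_box_img:
  assumes "T \<subseteq> Gamma n k"
  shows "dia n ` box_of n ` T = T" "box_of n ` T \<subseteq> reg (n - k) k"
  using Gamma_box[of _ n k] assms mf2 by (force simp: image_image)+

lemma box_dia_img:
  assumes "D \<subseteq> reg (n - k) k"
  shows "box_of n ` dia n ` D = D" "dia n ` D \<subseteq> Gamma n k"
  using reg_dia[of _ n k] assms mf2 by (force simp: image_image)+

lemma main:
  "bij_betw (pd_of_triang n k) {T. k_triangulation n k T} {D. reduced_pd_for (n - k) (pi_nk n k) D}"
proof (rule bij_betw_byWitness[where f' = "\<lambda>D. Gamma n k - dia n ` D"])
  show "\<forall>T\<in>{T. k_triangulation n k T}. Gamma n k - dia n ` pd_of_triang n k T = T"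
  proof
    fix T assume "T \<in> {T. k_triangulation n k T}"
    then have T: "T \<subseteq> Gamma n k" by (simp add: k_triangulation_def)
    have "dia n ` pd_of_triang n k T = Gamma n k - T"
      unfolding pd_of_triang_def using dia_box_img(1)[of "Gamma n k - T"] by blast
    then show "Gamma n k - dia n ` pd_of_triang n k T = T" using T by blast
  qed
  show "\<forall>D\<in>{D. reduced_pd_for (n - k) (pi_nk n k) D}. pd_of_triang n k (Gamma n k - dia n ` D) = D"
  proof
    fix D assume "D \<in> {D. reduced_pd_for (n - k) (pi_nk n k) D}"
    then have Dr: "D \<subseteq> reg (n - k) k" using reduced_facts(5)[OF k1 kn] by blast
    have "Gamma n k - (Gamma n k - dia n ` D) = dia n ` D" using box_dia_img(2)[OF Dr] by blast
    then show "pd_of_triang n k (Gamma n k - dia n ` D) = D"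
      unfolding pd_of_triang_def using box_dia_img(1)[OF Dr] by simp
  qed
  show "pd_of_triang n k ` {T. k_triangulation n k T} \<subseteq> {D. reduced_pd_for (n - k) (pi_nk n k) D}"
  proof
    fix D assume "D \<in> pd_of_triang n k ` {T. k_triangulation n k T}"
    then obtain T where T: "k_triangulation n k T" "D = box_of n ` (Gamma n k - T)"
      by (auto simp: pd_of_triang_def)
    have TG: "T \<subseteq> Gamma n k" and Tnc: "\<not> contains_crossing (k + 1) T"
      and Tmax: "\<forall>T'. T \<subset> T' \<and> T' \<subseteq> Gamma n k \<longrightarrow> contains_crossing (k + 1) T'"
      using T(1) by (auto simp: k_triangulation_def)
    define E where "E = box_of n ` T"
    have Ereg: "E \<subseteq> reg (n - k) k" using dia_box_img(2)[OF TG] by (simp add: E_def)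
    have dE: "dia n ` E = T" using dia_box_img(1)[OF TG] by (simp add: E_def)
    define Dm' where "Dm' = Dm (n - k) (reg (n - k) k - E)"
    have rD: "reduced_pd_for (n - k) (pi_nk n k) Dm'" and sD: "Dm' \<subseteq> reg (n - k) k - E"
      using A1[OF k1 kn Ereg] Tnc dE by (auto simp: Dm'_def)
    define T' where "T' = Gamma n k - dia n ` Dm'"
    have TT': "T \<subseteq> T'"
    proof
      fix t assume t: "t \<in> T"
      have "t \<notin> dia n ` Dm'"
      proof
        assume "t \<in> dia n ` Dm'"
        then obtain d where d: "d \<in> Dm'" "t = dia n d" by blast
        have "box_of n t = d" using reg_dia[of d n k] d sD mf2 by auto
        then have "d \<in> E" using t by (auto simp: E_def)
        then show False using d sD by auto
      qed
      then show "t \<in> T'" using t TG by (auto simp: T'_def)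
    qed
    have "\<not> contains_crossing (k + 1) T'" using B1[OF k1 kn rD] by (simp add: T'_def)
    then have "T' = T" using Tmax TT' by (auto simp: T'_def)
    have Dmr: "Dm' \<subseteq> reg (n - k) k" using sD by blast
    have "D = box_of n ` (Gamma n k - T')" using T(2) \<open>T' = T\<close> by simp
    also have "Gamma n k - T' = dia n ` Dm'" using box_dia_img(2)[OF Dmr] by (auto simp: T'_def)
    also have "box_of n ` dia n ` Dm' = Dm'" using box_dia_img(1)[OF Dmr] .
    finally show "D \<in> {D. reduced_pd_for (n - k) (pi_nk n k) D}" using rD by simp
  qed
  show "(\<lambda>D. Gamma n k - dia n ` D) ` {D. reduced_pd_for (n - k) (pi_nk n k) D} \<subseteq> {T. k_triangulation n k T}"
  proof
    fix T assume "T \<in> (\<lambda>D. Gamma n k - dia n ` D) ` {D. reduced_pd_for (n - k) (pi_nk n k) D}"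
    then obtain D where r: "reduced_pd_for (n - k) (pi_nk n k) D" and T: "T = Gamma n k - dia n ` D" by blast
    have Dr: "D \<subseteq> reg (n - k) k" using reduced_facts(5)[OF k1 kn r] .
    have nc: "\<not> contains_crossing (k + 1) T" using B1[OF k1 kn r] T by simp
    have mx: "contains_crossing (k + 1) T'" if T': "T \<subset> T'" "T' \<subseteq> Gamma n k" for T'
    proof (rule ccontr)
      assume nc': "\<not> contains_crossing (k + 1) T'"
      define E' where "E' = box_of n ` T'"
      have Ereg: "E' \<subseteq> reg (n - k) k" using dia_box_img(2)[OF T'(2)] by (simp add: E'_def)
      have dE: "dia n ` E' = T'" using dia_box_img(1)[OF T'(2)] by (simp add: E'_def)
      define D' where "D' = Dm (n - k) (reg (n - k) k - E')"
      have rD: "reduced_pd_for (n - k) (pi_nk n k) D'" and sD: "D' \<subseteq> reg (n - k) k - E'"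
        using A1[OF k1 kn Ereg] nc' dE by (auto simp: D'_def)
      have sub: "D' \<subseteq> D"
      proof
        fix y assume y: "y \<in> D'"
        then have yr: "y \<in> reg (n - k) k" "y \<notin> E'" using sD by auto
        have dy: "dia n y \<in> Gamma n k" "box_of n (dia n y) = y" using reg_dia[of y n k] yr mf2 by auto
        have "dia n y \<notin> T"
        proof
          assume "dia n y \<in> T"
          then have "dia n y \<in> T'" using T' by blast
          then have "y \<in> E'" using dy by (metis E'_def image_eqI)
          then show False using yr by simp
        qed
        then have "dia n y \<in> dia n ` D" using dy T by blast
        then obtain d where d: "d \<in> D" "dia n y = dia n d" by blast
        have "box_of n (dia n d) = d" using reg_dia[of d n k] Dr d mf2 by auto
        then have "y = d" using dy d by simp
        then show "y \<in> D" using d by simp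
      qed
      have "D' = D" using red_unique[OF rD r sub] .
      obtain t where t: "t \<in> T'" "t \<notin> T" using T' by blast
      have "t \<in> Gamma n k" using t T' by blast
      then have "t \<in> dia n ` D" using t T by blast
      then obtain d where d: "d \<in> D" "t = dia n d" by blast
      have "box_of n t = d" using reg_dia[of d n k] Dr d mf2 by auto
      then have "d \<in> E'" using t by (auto simp: E'_def)
      then show False using d \<open>D' = D\<close> sD by auto
    qed
    show "T \<in> {T. k_triangulation n k T}"
      unfolding k_triangulation_def using nc mx T by auto
  qed
qed

end

theorem theorem3p2:
  fixes n k :: nat
  assumes "1 \<le> k" and "2 * k + 1 \<le> n"
  shows "bij_betw (pd_of_triang n k) {T. k_triangulation n k T}
           {D. reduced_pd_for (n - k) (pi_nk n k) D}"
  using main[OF assms] .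


end
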